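(* A forest algebra $\mathcal F$ (finite or infinite) is 2-distributive if and only if it divides a wreath product $\mathcal G_1\wr\mathcal G_2$ of two (possibly infinite) distributive forest algebras $\mathcal G_1,\mathcal G_2$.
   Context: A forest algebra is a pair $(H,V)$ where $H$ is a monoid written additively, $V$ is a monoid written multiplicatively, and $V$ acts faithfully on $H$. For each $h$ there is $I_h\in V$ with $I_h h'=h+h'$, and each $h$ is of the form $v\cdot 0_H$. All forest algebras are horizontally commutative and idempotent. Morphisms preserve the monoid operations, the action and $h\mapsto I_h$. A subalgebra is a pair of subsets closed under all forest algebra operations. A congruence is a pair of equivalence relations on $H$ and $V$ compatible with all operations, and the quotient is formed from the equivalence classes. $(H,V)$ divides $(H',V')$, written $(H,V)\prec(H',V')$, if $(H,V)$ is a quotient of a subalgebra of $(H',V')$. The free forest algebra $\Sigma^\Delta=(H_\Sigma,V_\Sigma)$ has as forest part the finite sets of unordered trees $\alpha[C]$ (with $\alpha\in\Sigma$ and $C$ a finite set of trees), under union. Its contexts are forests with one leaf replaced by a hole. $\pi(f)$ is the prefix-closed set of root-starting label paths of a forest $f$. $(H,V)$ is distributive if $v(h_1+h_2)=vh_1+vh_2$ for all $v,h_1,h_2$. It is 2-distributive if for every finite alphabet $\Sigma$, every morphism $\phi:\Sigma^\Delta\to(H,V)$, every context $v$, and all forests $f_1,f_2$ with $\pi(f_1)=\pi(f_2)$, we have $\phi(v(f_1+f_2))=\phi(vf_1+vf_2)$. Wreath product: $(H_1,V_1)\wr(H_2,V_2)=(H_1\times H_2,\ V_1^{H_2}\times V_2)$.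 The action is $(f,v)(h_1,h_2)=(f(h_2)h_1,\ vh_2)$. Multiplication is $(f,v)(f',v')=(f'',vv')$ with $f''(h)=f(v'h)\cdot f'(h)$. *)

theory Defs
  imports Main "HOL-Library.FSet" "HOL-Library.FuncSet"
begin

record ('h, 'v) falg =
  Hc   :: "'h set"
  Vc   :: "'v set"
  hadd :: "'h \<Rightarrow> 'h \<Rightarrow> 'h"
  hzero :: "'h"
  vmul :: "'v \<Rightarrow> 'v \<Rightarrow> 'v"
  vone :: "'v"
  act  :: "'v \<Rightarrow> 'h \<Rightarrow> 'h"
  ins  :: "'h \<Rightarrow> 'v"

definition forest_algebra :: "('h, 'v, 'z) falg_scheme \<Rightarrow> bool" where
  "forest_algebra A \<longleftrightarrow>
     hzero A \<in> Hc A \<and> vone A \<in> Vc A \<and>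
     (\<forall>h\<in>Hc A. \<forall>h'\<in>Hc A. hadd A h h' \<in> Hc A) \<and>
     (\<forall>v\<in>Vc A. \<forall>w\<in>Vc A. vmul A v w \<in> Vc A) \<and>
     (\<forall>v\<in>Vc A. \<forall>h\<in>Hc A. act A v h \<in> Hc A) \<and>
     (\<forall>h\<in>Hc A. ins A h \<in> Vc A) \<and>
     \<comment> \<open>H is a monoid, horizontally commutative and idempotent\<close>
     (\<forall>a\<in>Hc A. \<forall>b\<in>Hc A. \<forall>c\<in>Hc A. hadd A (hadd A a b) c = hadd A a (hadd A b c)) \<and>
     (\<forall>a\<in>Hc A. hadd A (hzero A) a = a \<and> hadd A a (hzero A) = a) \<and>
     (\<forall>a\<in>Hc A. \<forall>b\<in>Hc A. hadd A a b = hadd A b a) \<and>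
     (\<forall>a\<in>Hc A. hadd A a a = a) \<and>
     \<comment> \<open>V is a monoid\<close>
     (\<forall>a\<in>Vc A. \<forall>b\<in>Vc A. \<forall>c\<in>Vc A. vmul A (vmul A a b) c = vmul A a (vmul A b c)) \<and>
     (\<forall>a\<in>Vc A. vmul A (vone A) a = a \<and> vmul A a (vone A) = a) \<and>
     \<comment> \<open>V acts on H (monoid action), faithfully\<close>
     (\<forall>v\<in>Vc A. \<forall>w\<in>Vc A. \<forall>h\<in>Hc A. act A (vmul A v w) h = act A v (act A w h)) \<and>
     (\<forall>h\<in>Hc A. act A (vone A) h = h) \<and>
     (\<forall>v\<in>Vc A. \<forall>w\<in>Vc A. (\<forall>h\<in>Hc A. act A v h = act A w h) \<longrightarrow> v = w) \<and>
     \<comment> \<open>I_h h' = h + h'\<close>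
     (\<forall>h\<in>Hc A. \<forall>h'\<in>Hc A. act A (ins A h) h' = hadd A h h') \<and>
     \<comment> \<open>every h is of the form v 0\<close>
     (\<forall>h\<in>Hc A. \<exists>v\<in>Vc A. h = act A v (hzero A))"

definition morphism ::
  "('h, 'v, 'z) falg_scheme \<Rightarrow> ('h2, 'v2, 'z2) falg_scheme \<Rightarrow> ('h \<Rightarrow> 'h2) \<Rightarrow> ('v \<Rightarrow> 'v2) \<Rightarrow> bool" where
  "morphism A B \<phi> \<psi> \<longleftrightarrow>
     (\<forall>h\<in>Hc A. \<phi> h \<in> Hc B) \<and> (\<forall>v\<in>Vc A. \<psi> v \<in> Vc B) \<and>
     \<phi> (hzero A) = hzero B \<and>
     (\<forall>h\<in>Hc A. \<forall>h'\<in>Hc A. \<phi> (hadd A h h') = hadd B (\<phi> h) (\<phi> h')) \<and>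
     \<psi> (vone A) = vone B \<and>
     (\<forall>v\<in>Vc A. \<forall>w\<in>Vc A. \<psi> (vmul A v w) = vmul B (\<psi> v) (\<psi> w)) \<and>
     (\<forall>v\<in>Vc A. \<forall>h\<in>Hc A. \<phi> (act A v h) = act B (\<psi> v) (\<phi> h)) \<and>
     (\<forall>h\<in>Hc A. \<psi> (ins A h) = ins B (\<phi> h))"

definition isomorphism ::
  "('h, 'v, 'z) falg_scheme \<Rightarrow> ('h2, 'v2, 'z2) falg_scheme \<Rightarrow> ('h \<Rightarrow> 'h2) \<Rightarrow> ('v \<Rightarrow> 'v2) \<Rightarrow> bool" where
  "isomorphism A B \<phi> \<psi> \<longleftrightarrow>
     morphism A B \<phi> \<psi> \<and> bij_betw \<phi> (Hc A) (Hc B) \<and> bij_betw \<psi> (Vc A) (Vc B)"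

definition is_subalgebra :: "('h, 'v, 'z) falg_scheme \<Rightarrow> 'h set \<Rightarrow> 'v set \<Rightarrow> bool" where
  "is_subalgebra A H V \<longleftrightarrow>
     H \<subseteq> Hc A \<and> V \<subseteq> Vc A \<and>
     hzero A \<in> H \<and> vone A \<in> V \<and>
     (\<forall>h\<in>H. \<forall>h'\<in>H. hadd A h h' \<in> H) \<and>
     (\<forall>v\<in>V. \<forall>w\<in>V. vmul A v w \<in> V) \<and>
     (\<forall>v\<in>V. \<forall>h\<in>H. act A v h \<in> H) \<and>
     (\<forall>h\<in>H. ins A h \<in> V)"

definition restrict_alg :: "('h, 'v, 'z) falg_scheme \<Rightarrow> 'h set \<Rightarrow> 'v set \<Rightarrow> ('h, 'v) falg" where
  "restrict_alg A H V =
     \<lparr> Hc = H, Vc = V, hadd = hadd A, hzero = hzero A, vmul = vmul A, vone = vone A,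
       act = act A, ins = ins A \<rparr>"

definition congruence :: "('h, 'v, 'z) falg_scheme \<Rightarrow> 'h rel \<Rightarrow> 'v rel \<Rightarrow> bool" where
  "congruence A R S \<longleftrightarrow>
     equiv (Hc A) R \<and> equiv (Vc A) S \<and>
     (\<forall>h1 h2 h1' h2'. (h1, h1') \<in> R \<and> (h2, h2') \<in> R \<longrightarrow> (hadd A h1 h2, hadd A h1' h2') \<in> R) \<and>
     (\<forall>v1 v2 v1' v2'. (v1, v1') \<in> S \<and> (v2, v2') \<in> S \<longrightarrow> (vmul A v1 v2, vmul A v1' v2') \<in> S) \<and>
     (\<forall>v v' h h'. (v, v') \<in> S \<and> (h, h') \<in> R \<longrightarrow> (act A v h, act A v' h') \<in> R) \<and>
     (\<forall>h h'. (h, h') \<in> R \<longrightarrow> (ins A h, ins A h') \<in> S)"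

text \<open>Quotient: carriers are the equivalence classes; operations act on representatives
  (well defined for a congruence; we take the union over all representatives).\<close>
definition quotient_alg :: "('h, 'v, 'z) falg_scheme \<Rightarrow> 'h rel \<Rightarrow> 'v rel \<Rightarrow> ('h set, 'v set) falg" where
  "quotient_alg A R S =
     \<lparr> Hc = Hc A // R, Vc = Vc A // S,
       hadd = (\<lambda>X Y. \<Union>{R `` {hadd A x y} | x y. x \<in> X \<and> y \<in> Y}),
       hzero = R `` {hzero A},
       vmul = (\<lambda>X Y. \<Union>{S `` {vmul A x y} | x y. x \<in> X \<and> y \<in> Y}),
       vone = S `` {vone A},
       act = (\<lambda>X Y. \<Union>{R `` {act A x y} | x y. x \<in> X \<and> y \<in> Y}),
       ins = (\<lambda>Y. \<Union>{S `` {ins A y} | y. y \<in> Y}) \<rparr>"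

definition divides :: "('h, 'v, 'z) falg_scheme \<Rightarrow> ('h2, 'v2, 'z2) falg_scheme \<Rightarrow> bool" where
  "divides F G \<longleftrightarrow>
     (\<exists>H V R S \<phi> \<psi>. is_subalgebra G H V \<and> congruence (restrict_alg G H V) R S \<and>
        isomorphism (quotient_alg (restrict_alg G H V) R S) F \<phi> \<psi>)"

definition distributive :: "('h, 'v, 'z) falg_scheme \<Rightarrow> bool" where
  "distributive A \<longleftrightarrow>
     (\<forall>v\<in>Vc A. \<forall>h1\<in>Hc A. \<forall>h2\<in>Hc A.
        act A v (hadd A h1 h2) = hadd A (act A v h1) (act A v h2))"

definition wreath ::
  "('h1, 'v1, 'z1) falg_scheme \<Rightarrow> ('h2, 'v2, 'z2) falg_scheme \<Rightarrow>
   ('h1 \<times> 'h2, ('h2 \<Rightarrow> 'v1) \<times> 'v2) falg" where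
  "wreath G1 G2 =
     \<lparr> Hc = Hc G1 \<times> Hc G2,
       Vc = (Hc G2 \<rightarrow>\<^sub>E Vc G1) \<times> Vc G2,
       hadd = (\<lambda>(a1, a2) (b1, b2). (hadd G1 a1 b1, hadd G2 a2 b2)),
       hzero = (hzero G1, hzero G2),
       vmul = (\<lambda>(f, v) (f', v'). (\<lambda>h\<in>Hc G2. vmul G1 (f (act G2 v' h)) (f' h), vmul G2 v v')),
       vone = (\<lambda>h\<in>Hc G2. vone G1, vone G2),
       act = (\<lambda>(f, v) (h1, h2). (act G1 (f h2) h1, act G2 v h2)),
       ins = (\<lambda>(h1, h2). (\<lambda>h\<in>Hc G2. ins G1 h1, ins G2 h2)) \<rparr>"

datatype 'a tree = Node 'a "'a tree fset"

type_synonym 'a forest = "'a tree fset"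

text \<open>Contexts: a forest with exactly one leaf replaced by a hole. Canonical form:
  \<open>CHole F\<close> is the context \<open>F + \<box>\<close>, and \<open>CNode F a c\<close> is \<open>F + a[c]\<close>.\<close>
datatype 'a ctx = CHole "'a forest" | CNode "'a forest" 'a "'a ctx"

primrec tlabels :: "'a tree \<Rightarrow> 'a set" where
  "tlabels (Node a C) = insert a (\<Union> (fset (fimage tlabels C)))"

definition flabels :: "'a forest \<Rightarrow> 'a set" where
  "flabels f = \<Union> (tlabels ` fset f)"

primrec clabels :: "'a ctx \<Rightarrow> 'a set" where
  "clabels (CHole F) = flabels F"
| "clabels (CNode F a c) = flabels F \<union> insert a (clabels c)"

primrec fill :: "'a ctx \<Rightarrow> 'a forest \<Rightarrow> 'a forest" where
  "fill (CHole F) f = F |\<union>| f"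
| "fill (CNode F a c) f = F |\<union>| {|Node a (fill c f)|}"

primrec cadd :: "'a forest \<Rightarrow> 'a ctx \<Rightarrow> 'a ctx" where
  "cadd F (CHole G) = CHole (F |\<union>| G)"
| "cadd F (CNode G a c) = CNode (F |\<union>| G) a c"

primrec ccomp :: "'a ctx \<Rightarrow> 'a ctx \<Rightarrow> 'a ctx" where
  "ccomp (CHole F) w = cadd F w"
| "ccomp (CNode F a c) w = CNode F a (ccomp c w)"

definition free_falg :: "'a set \<Rightarrow> ('a forest, 'a ctx) falg" where
  "free_falg \<Sigma> =
     \<lparr> Hc = {f. flabels f \<subseteq> \<Sigma>}, Vc = {c. clabels c \<subseteq> \<Sigma>},
       hadd = (|\<union>|), hzero = {||}, vmul = ccomp, vone = CHole {||},
       act = fill, ins = CHole \<rparr>"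

primrec tpaths :: "'a tree \<Rightarrow> 'a list set" where
  "tpaths (Node a C) = insert [a] ((\<lambda>p. a # p) ` \<Union> (fset (fimage tpaths C)))"

definition paths :: "'a forest \<Rightarrow> 'a list set" where
  "paths f = \<Union> (tpaths ` fset f)"

text \<open>Finite alphabets are taken as finite subsets of nat (every finite alphabet is
  in bijection with one).\<close>
definition two_distributive :: "('h, 'v, 'z) falg_scheme \<Rightarrow> bool" where
  "two_distributive A \<longleftrightarrow>
     (\<forall>\<Sigma> :: nat set. finite \<Sigma> \<longrightarrow>
       (\<forall>\<phi> \<psi>. morphism (free_falg \<Sigma>) A \<phi> \<psi> \<longrightarrow>
         (\<forall>v\<in>Vc (free_falg \<Sigma>). \<forall>f1\<in>Hc (free_falg \<Sigma>). \<forall>f2\<in>Hc (free_falg \<Sigma>).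
            paths f1 = paths f2 \<longrightarrow>
            \<phi> (fill v (f1 |\<union>| f2)) = \<phi> (fill v f1 |\<union>| fill v f2))))"

end

theory Submission
  imports Defs
begin


locale FA =
  fixes A :: "('h, 'v, 'z) falg_scheme"
  assumes fa: "forest_algebra A"
begin

lemma hzero_c[simp]: "hzero A \<in> Hc A" and vone_c[simp]: "vone A \<in> Vc A"
  using fa unfolding forest_algebra_def by auto

lemma hadd_c[simp]: "h \<in> Hc A \<Longrightarrow> h' \<in> Hc A \<Longrightarrow> hadd A h h' \<in> Hc A"
  using fa unfolding forest_algebra_def by auto
lemma vmul_c[simp]: "v \<in> Vc A \<Longrightarrow> w \<in> Vc A \<Longrightarrow> vmul A v w \<in> Vc A"
  using fa unfolding forest_algebra_def by auto
lemma act_c[simp]: "v \<in> Vc A \<Longrightarrow> h \<in> Hc A \<Longrightarrow> act A v h \<in> Hc A"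
  using fa unfolding forest_algebra_def by auto
lemma ins_c[simp]: "h \<in> Hc A \<Longrightarrow> ins A h \<in> Vc A"
  using fa unfolding forest_algebra_def by auto
lemma hadd_assoc: "a \<in> Hc A \<Longrightarrow> b \<in> Hc A \<Longrightarrow> c \<in> Hc A \<Longrightarrow> hadd A (hadd A a b) c = hadd A a (hadd A b c)"
  using fa unfolding forest_algebra_def by auto
lemma hadd_zero[simp]: "a \<in> Hc A \<Longrightarrow> hadd A (hzero A) a = a"  "a \<in> Hc A \<Longrightarrow> hadd A a (hzero A) = a"
  using fa unfolding forest_algebra_def by auto
lemma hadd_comm: "a \<in> Hc A \<Longrightarrow> b \<in> Hc A \<Longrightarrow> hadd A a b = hadd A b a"
  using fa unfolding forest_algebra_def by auto
lemma hadd_idem[simp]: "a \<in> Hc A \<Longrightarrow> hadd A a a = a"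
  using fa unfolding forest_algebra_def by auto
lemma hadd_left_comm: "a \<in> Hc A \<Longrightarrow> b \<in> Hc A \<Longrightarrow> c \<in> Hc A \<Longrightarrow> hadd A a (hadd A b c) = hadd A b (hadd A a c)"
  by (metis hadd_assoc hadd_comm)
lemma hadd_left_idem: "a \<in> Hc A \<Longrightarrow> b \<in> Hc A \<Longrightarrow> hadd A a (hadd A a b) = hadd A a b"
  by (metis hadd_assoc hadd_idem)
lemma vmul_assoc: "a \<in> Vc A \<Longrightarrow> b \<in> Vc A \<Longrightarrow> c \<in> Vc A \<Longrightarrow> vmul A (vmul A a b) c = vmul A a (vmul A b c)"
  using fa unfolding forest_algebra_def by auto
lemma vmul_one[simp]: "a \<in> Vc A \<Longrightarrow> vmul A (vone A) a = a" "a \<in> Vc A \<Longrightarrow> vmul A a (vone A) = a"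
  using fa unfolding forest_algebra_def by auto
lemma act_mul: "v \<in> Vc A \<Longrightarrow> w \<in> Vc A \<Longrightarrow> h \<in> Hc A \<Longrightarrow> act A (vmul A v w) h = act A v (act A w h)"
  using fa unfolding forest_algebra_def by auto
lemma act_one[simp]: "h \<in> Hc A \<Longrightarrow> act A (vone A) h = h"
  using fa unfolding forest_algebra_def by auto
lemma faithful: "v \<in> Vc A \<Longrightarrow> w \<in> Vc A \<Longrightarrow> (\<And>h. h \<in> Hc A \<Longrightarrow> act A v h = act A w h) \<Longrightarrow> v = w"
proof -
  assume "v \<in> Vc A" "w \<in> Vc A" "\<And>h. h \<in> Hc A \<Longrightarrow> act A v h = act A w h"
  moreover have "\<forall>v\<in>Vc A. \<forall>w\<in>Vc A. (\<forall>h\<in>Hc A. act A v h = act A w h) \<longrightarrow> v = w"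
    using fa unfolding forest_algebra_def by blast
  ultimately show ?thesis by blast
qed
lemma act_ins: "h \<in> Hc A \<Longrightarrow> h' \<in> Hc A \<Longrightarrow> act A (ins A h) h' = hadd A h h'"
  using fa unfolding forest_algebra_def by auto
lemma gen: "h \<in> Hc A \<Longrightarrow> \<exists>v\<in>Vc A. h = act A v (hzero A)"
  using fa unfolding forest_algebra_def by auto

lemma ins_zero: "ins A (hzero A) = vone A"
  by (rule faithful) (auto simp: act_ins)

lemma ins_hadd: "h \<in> Hc A \<Longrightarrow> h' \<in> Hc A \<Longrightarrow> ins A (hadd A h h') = vmul A (ins A h) (ins A h')"
  by (rule faithful) (auto simp: act_ins act_mul hadd_assoc)

end


definition hop :: "('h, 'v, 'z) falg_scheme \<Rightarrow> 'h \<Rightarrow> 'h \<Rightarrow> 'h" where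
  "hop A x z = (if x \<in> Hc A \<and> z \<in> Hc A then hadd A x z else z)"

definition hsum :: "('h, 'v, 'z) falg_scheme \<Rightarrow> 'h set \<Rightarrow> 'h" where
  "hsum A X = Finite_Set.fold (hop A) (hzero A) X"

context FA begin

lemma hop_cfi: "comp_fun_idem_on (Hc A) (hop A)"
proof
  fix x y assume "x \<in> Hc A" "y \<in> Hc A"
  then show "hop A y \<circ> hop A x = hop A x \<circ> hop A y"
    by (auto simp: fun_eq_iff hop_def hadd_left_comm)
next
  fix x assume "x \<in> Hc A"
  then show "hop A x \<circ> hop A x = hop A x"
    by (auto simp: fun_eq_iff hop_def hadd_left_idem)
qed

lemma hsum_empty[simp]: "hsum A {} = hzero A"
  by (simp add: hsum_def)

lemma hsum_c: "finite X \<Longrightarrow> X \<subseteq> Hc A \<Longrightarrow> hsum A X \<in> Hc A"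
proof (induction X rule: finite_induct)
  case empty then show ?case by simp
next
  case (insert x F)
  interpret comp_fun_idem_on "Hc A" "hop A" by (rule hop_cfi)
  show ?case using insert by (simp add: hsum_def hop_def)
qed

lemma hsum_insert: "finite X \<Longrightarrow> X \<subseteq> Hc A \<Longrightarrow> x \<in> Hc A \<Longrightarrow> hsum A (insert x X) = hadd A x (hsum A X)"
proof -
  assume a: "finite X" "X \<subseteq> Hc A" "x \<in> Hc A"
  interpret comp_fun_idem_on "Hc A" "hop A" by (rule hop_cfi)
  have "hsum A (insert x X) = hop A x (hsum A X)"
    unfolding hsum_def using a by (simp add: fold_insert_idem)
  then show ?thesis using a hsum_c by (simp add: hop_def)
qed

lemma hsum_union: "finite X \<Longrightarrow> X \<subseteq> Hc A \<Longrightarrow> finite Y \<Longrightarrow> Y \<subseteq> Hc A \<Longrightarrow>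
   hsum A (X \<union> Y) = hadd A (hsum A X) (hsum A Y)"
proof (induction X rule: finite_induct)
  case empty then show ?case using hsum_c by simp
next
  case (insert x F)
  then show ?case using hsum_c by (simp add: hsum_insert hadd_assoc)
qed

lemma hsum_single[simp]: "x \<in> Hc A \<Longrightarrow> hsum A {x} = x"
  using hsum_insert[of "{}" x] by simp

end

section \<open>Evaluation of free forests and contexts\<close>

primrec fev :: "('h, 'v, 'z) falg_scheme \<Rightarrow> ('a \<Rightarrow> 'v) \<Rightarrow> 'a tree \<Rightarrow> 'h" where
  "fev A \<sigma> (Node a C) = act A (\<sigma> a) (hsum A (fset (fimage (fev A \<sigma>) C)))"

definition fevs :: "('h, 'v, 'z) falg_scheme \<Rightarrow> ('a \<Rightarrow> 'v) \<Rightarrow> 'a forest \<Rightarrow> 'h" where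
  "fevs A \<sigma> f = hsum A (fset (fimage (fev A \<sigma>) f))"

lemma fev_Node: "fev A \<sigma> (Node a C) = act A (\<sigma> a) (fevs A \<sigma> C)"
  by (simp add: fevs_def)

declare fev.simps[simp del]

primrec cev :: "('h, 'v, 'z) falg_scheme \<Rightarrow> ('a \<Rightarrow> 'v) \<Rightarrow> 'a ctx \<Rightarrow> 'v" where
  "cev A \<sigma> (CHole F) = ins A (fevs A \<sigma> F)"
| "cev A \<sigma> (CNode F a c) = vmul A (ins A (fevs A \<sigma> F)) (vmul A (\<sigma> a) (cev A \<sigma> c))"

lemma flabels_empty[simp]: "flabels {||} = {}"
  by (simp add: flabels_def)
lemma flabels_union[simp]: "flabels (f |\<union>| g) = flabels f \<union> flabels g"
  by (auto simp: flabels_def)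
lemma flabels_insert[simp]: "flabels (finsert t g) = tlabels t \<union> flabels g"
  by (auto simp: flabels_def)
lemma tlabels_Node[simp]: "tlabels (Node a C) = insert a (flabels C)"
  by (auto simp: flabels_def)
declare tlabels.simps[simp del]
lemma flabels_mem: "t |\<in>| f \<Longrightarrow> tlabels t \<subseteq> flabels f"
  by (auto simp: flabels_def)
lemma finite_tlabels: "finite (tlabels t)"
  by (induction t) (auto simp: flabels_def)
lemma finite_flabels: "finite (flabels f)"
  by (auto simp: flabels_def finite_tlabels)

lemma clabels_cadd[simp]: "clabels (cadd F c) = flabels F \<union> clabels c"
  by (cases c) auto
lemma clabels_ccomp[simp]: "clabels (ccomp c d) = clabels c \<union> clabels d"
  by (induction c) auto
lemma flabels_fill[simp]: "flabels (fill c f) = clabels c \<union> flabels f"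
  by (induction c) (auto simp: tlabels_Node)

locale FEV = FA A for A :: "('h, 'v, 'z) falg_scheme" +
  fixes \<Sigma> :: "'a set" and \<sigma> :: "'a \<Rightarrow> 'v"
  assumes sig: "\<sigma> ` \<Sigma> \<subseteq> Vc A"
begin

lemma sig_in[simp]: "a \<in> \<Sigma> \<Longrightarrow> \<sigma> a \<in> Vc A"
  using sig by auto

lemma fev_c[simp]: "tlabels t \<subseteq> \<Sigma> \<Longrightarrow> fev A \<sigma> t \<in> Hc A"
proof (induction t)
  case (Node a C)
  have "hsum A (fset (fimage (fev A \<sigma>) C)) \<in> Hc A"
    apply (rule hsum_c)
    using Node by (auto simp: tlabels_Node flabels_def)
  then show ?case using Node by (auto simp: fev.simps)
qed

lemma fev_img_c: "flabels f \<subseteq> \<Sigma> \<Longrightarrow> fev A \<sigma> ` fset f \<subseteq> Hc A"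
  using fev_c flabels_mem by (metis (no_types, lifting) image_subsetI order_trans)

lemma fevs_c[simp]: "flabels f \<subseteq> \<Sigma> \<Longrightarrow> fevs A \<sigma> f \<in> Hc A"
  unfolding fevs_def by (rule hsum_c) (auto dest: fev_img_c)

lemma fevs_empty[simp]: "fevs A \<sigma> {||} = hzero A"
  by (simp add: fevs_def)

lemma fevs_union: "flabels f \<subseteq> \<Sigma> \<Longrightarrow> flabels g \<subseteq> \<Sigma> \<Longrightarrow>
   fevs A \<sigma> (f |\<union>| g) = hadd A (fevs A \<sigma> f) (fevs A \<sigma> g)"
  unfolding fevs_def
  by (simp add: image_Un, rule hsum_union) (auto dest: fev_img_c)

lemma fevs_single: "tlabels t \<subseteq> \<Sigma> \<Longrightarrow> fevs A \<sigma> {|t|} = fev A \<sigma> t"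
  unfolding fevs_def using fev_c[of t] by simp

lemma fevs_insert: "tlabels t \<subseteq> \<Sigma> \<Longrightarrow> flabels f \<subseteq> \<Sigma> \<Longrightarrow>
   fevs A \<sigma> (finsert t f) = hadd A (fev A \<sigma> t) (fevs A \<sigma> f)"
  using fevs_union[of "{|t|}" f] fevs_single[of t] by simp

lemma cev_c[simp]: "clabels c \<subseteq> \<Sigma> \<Longrightarrow> cev A \<sigma> c \<in> Vc A"
  by (induction c) auto

lemma fevs_fill: "clabels c \<subseteq> \<Sigma> \<Longrightarrow> flabels f \<subseteq> \<Sigma> \<Longrightarrow>
   fevs A \<sigma> (fill c f) = act A (cev A \<sigma> c) (fevs A \<sigma> f)"
proof (induction c)
  case (CHole F)
  then show ?case by (auto simp: fevs_union act_ins)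
next
  case (CNode F a c)
  have l: "tlabels (Node a (fill c f)) \<subseteq> \<Sigma>" using CNode by (auto simp: tlabels_Node)
  have "fevs A \<sigma> (fill (CNode F a c) f) = hadd A (fevs A \<sigma> F) (fev A \<sigma> (Node a (fill c f)))"
    using CNode l fevs_union[of F "{|Node a (fill c f)|}"] by (simp add: fevs_single)
  also have "\<dots> = hadd A (fevs A \<sigma> F) (act A (\<sigma> a) (act A (cev A \<sigma> c) (fevs A \<sigma> f)))"
    using CNode by (simp add: fev_Node)
  also have "\<dots> = act A (cev A \<sigma> (CNode F a c)) (fevs A \<sigma> f)"
    using CNode by (simp add: act_mul act_ins)
  finally show ?case .
qed

lemma cev_cadd: "flabels F \<subseteq> \<Sigma> \<Longrightarrow> clabels d \<subseteq> \<Sigma> \<Longrightarrow>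
   cev A \<sigma> (cadd F d) = vmul A (ins A (fevs A \<sigma> F)) (cev A \<sigma> d)"
  by (cases d) (auto simp: fevs_union ins_hadd vmul_assoc)

lemma cev_ccomp: "clabels c \<subseteq> \<Sigma> \<Longrightarrow> clabels d \<subseteq> \<Sigma> \<Longrightarrow>
   cev A \<sigma> (ccomp c d) = vmul A (cev A \<sigma> c) (cev A \<sigma> d)"
  by (induction c) (auto simp: cev_cadd vmul_assoc)

lemma free_morphism: "morphism (free_falg \<Sigma>) A (fevs A \<sigma>) (cev A \<sigma>)"
  unfolding morphism_def free_falg_def
  by (auto simp: fevs_union cev_ccomp fevs_fill ins_zero)

end


lemma wreath_sel[simp]:
  "Hc (wreath G1 G2) = Hc G1 \<times> Hc G2"
  "Vc (wreath G1 G2) = (Hc G2 \<rightarrow>\<^sub>E Vc G1) \<times> Vc G2"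
  "hadd (wreath G1 G2) (a1, a2) (b1, b2) = (hadd G1 a1 b1, hadd G2 a2 b2)"
  "hzero (wreath G1 G2) = (hzero G1, hzero G2)"
  "vmul (wreath G1 G2) (f, v) (f', v') = (\<lambda>h\<in>Hc G2. vmul G1 (f (act G2 v' h)) (f' h), vmul G2 v v')"
  "vone (wreath G1 G2) = (\<lambda>h\<in>Hc G2. vone G1, vone G2)"
  "act (wreath G1 G2) (f, v) (h1, h2) = (act G1 (f h2) h1, act G2 v h2)"
  "ins (wreath G1 G2) (h1, h2) = (\<lambda>h\<in>Hc G2. ins G1 h1, ins G2 h2)"
  by (simp_all add: wreath_def)

lemma wreath_fa:
  assumes A1: "forest_algebra G1" and A2: "forest_algebra G2"
  shows "forest_algebra (wreath G1 G2)"
proof -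
  interpret G1: FA G1 by (rule FA.intro, rule A1)
  interpret G2: FA G2 by (rule FA.intro, rule A2)
  let ?W = "wreath G1 G2"
  have c1: "hzero ?W \<in> Hc ?W" "vone ?W \<in> Vc ?W" by auto
  have c2: "\<forall>h\<in>Hc ?W. \<forall>h'\<in>Hc ?W. hadd ?W h h' \<in> Hc ?W" by auto
  have c3: "\<forall>v\<in>Vc ?W. \<forall>w\<in>Vc ?W. vmul ?W v w \<in> Vc ?W" by (auto simp: PiE_iff)
  have c4: "\<forall>v\<in>Vc ?W. \<forall>h\<in>Hc ?W. act ?W v h \<in> Hc ?W" by (auto simp: PiE_iff)
  have c5: "\<forall>h\<in>Hc ?W. ins ?W h \<in> Vc ?W" by auto
  have m1: "\<forall>a\<in>Hc ?W. \<forall>b\<in>Hc ?W. \<forall>c\<in>Hc ?W. hadd ?W (hadd ?W a b) c = hadd ?W a (hadd ?W b c)"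
    by (auto simp: G1.hadd_assoc G2.hadd_assoc)
  have m2: "\<forall>a\<in>Hc ?W. hadd ?W (hzero ?W) a = a \<and> hadd ?W a (hzero ?W) = a" by auto
  have m3: "\<forall>a\<in>Hc ?W. \<forall>b\<in>Hc ?W. hadd ?W a b = hadd ?W b a"
    by (auto simp: G1.hadd_comm G2.hadd_comm)
  have m4: "\<forall>a\<in>Hc ?W. hadd ?W a a = a" by auto
  have m5: "\<forall>a\<in>Vc ?W. \<forall>b\<in>Vc ?W. \<forall>c\<in>Vc ?W. vmul ?W (vmul ?W a b) c = vmul ?W a (vmul ?W b c)"
  proof (intro ballI)
    fix a b c assume "a \<in> Vc ?W" "b \<in> Vc ?W" "c \<in> Vc ?W"
    then obtain f v f' v' f'' v'' where abc: "a = (f, v)" "b = (f', v')" "c = (f'', v'')"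
      and in1: "f \<in> Hc G2 \<rightarrow>\<^sub>E Vc G1" "f' \<in> Hc G2 \<rightarrow>\<^sub>E Vc G1" "f'' \<in> Hc G2 \<rightarrow>\<^sub>E Vc G1"
      and in2: "v \<in> Vc G2" "v' \<in> Vc G2" "v'' \<in> Vc G2" by auto
    show "vmul ?W (vmul ?W a b) c = vmul ?W a (vmul ?W b c)"
      using in1 in2 unfolding abc
      by (auto simp: G2.act_mul G1.vmul_assoc G2.vmul_assoc PiE_iff intro!: ext)
  qed
  have m6: "\<forall>a\<in>Vc ?W. vmul ?W (vone ?W) a = a \<and> vmul ?W a (vone ?W) = a"
    by (auto simp: PiE_iff intro!: ext) (auto simp: extensional_def)
  have m7: "\<forall>v\<in>Vc ?W. \<forall>w\<in>Vc ?W. \<forall>h\<in>Hc ?W. act ?W (vmul ?W v w) h = act ?W v (act ?W w h)"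
    by (auto simp: PiE_iff G1.act_mul G2.act_mul)
  have m8: "\<forall>h\<in>Hc ?W. act ?W (vone ?W) h = h" by auto
  have m9: "\<forall>v\<in>Vc ?W. \<forall>w\<in>Vc ?W. (\<forall>h\<in>Hc ?W. act ?W v h = act ?W w h) \<longrightarrow> v = w"
  proof (intro ballI impI)
    fix a b assume ab: "a \<in> Vc ?W" "b \<in> Vc ?W" and eq: "\<forall>h\<in>Hc ?W. act ?W a h = act ?W b h"
    then obtain f v f' v' where abc: "a = (f, v)" "b = (f', v')"
      and in1: "f \<in> Hc G2 \<rightarrow>\<^sub>E Vc G1" "f' \<in> Hc G2 \<rightarrow>\<^sub>E Vc G1"
      and in2: "v \<in> Vc G2" "v' \<in> Vc G2" by auto
    have e: "act G1 (f h2) h1 = act G1 (f' h2) h1 \<and> act G2 v h2 = act G2 v' h2"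
      if "h1 \<in> Hc G1" "h2 \<in> Hc G2" for h1 h2
      using eq that unfolding abc by auto
    have "v = v'" using e in2 by (intro G2.faithful) (auto intro: G1.hzero_c)
    moreover have "f = f'"
    proof (rule PiE_ext[OF in1])
      fix h2 assume "h2 \<in> Hc G2"
      then show "f h2 = f' h2" using e in1 by (intro G1.faithful) auto
    qed
    ultimately show "a = b" using abc by simp
  qed
  have m10: "\<forall>h\<in>Hc ?W. \<forall>h'\<in>Hc ?W. act ?W (ins ?W h) h' = hadd ?W h h'"
    by (auto simp: G1.act_ins G2.act_ins)
  have m11: "\<forall>h\<in>Hc ?W. \<exists>v\<in>Vc ?W. h = act ?W v (hzero ?W)"
  proof
    fix h assume "h \<in> Hc ?W"
    then obtain h1 h2 where "h = (h1, h2)" "h1 \<in> Hc G1" "h2 \<in> Hc G2" by auto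
    then show "\<exists>v\<in>Vc ?W. h = act ?W v (hzero ?W)"
      by (intro bexI[of _ "ins ?W (h1, h2)"]) (auto simp: G1.act_ins G2.act_ins)
  qed
  show ?thesis unfolding forest_algebra_def
    using c1 c2 c3 c4 c5 m1 m2 m3 m4 m5 m6 m7 m8 m9 m10 m11 by blast
qed


section \<open>Quotients and division\<close>

lemma restrict_sel[simp]:
  "Hc (restrict_alg W H V) = H" "Vc (restrict_alg W H V) = V"
  "hadd (restrict_alg W H V) = hadd W" "hzero (restrict_alg W H V) = hzero W"
  "vmul (restrict_alg W H V) = vmul W" "vone (restrict_alg W H V) = vone W"
  "act (restrict_alg W H V) = act W" "ins (restrict_alg W H V) = ins W"
  by (simp_all add: restrict_alg_def)

lemma quot_sel:
  "Hc (quotient_alg A R S) = Hc A // R" "Vc (quotient_alg A R S) = Vc A // S"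
  "hadd (quotient_alg A R S) X Y = \<Union>{R `` {hadd A x y} | x y. x \<in> X \<and> y \<in> Y}"
  "hzero (quotient_alg A R S) = R `` {hzero A}"
  "vmul (quotient_alg A R S) X' Y' = \<Union>{S `` {vmul A x y} | x y. x \<in> X' \<and> y \<in> Y'}"
  "vone (quotient_alg A R S) = S `` {vone A}"
  "act (quotient_alg A R S) X' Y = \<Union>{R `` {act A x y} | x y. x \<in> X' \<and> y \<in> Y}"
  "ins (quotient_alg A R S) Y = \<Union>{S `` {ins A y} | y. y \<in> Y}"
  unfolding quotient_alg_def by (simp_all only: falg.simps)

lemma Union_const: "(\<And>X. X \<in> Z \<Longrightarrow> X = c) \<Longrightarrow> c \<in> Z \<Longrightarrow> \<Union>Z = c"
proof -
  assume a: "\<And>X. X \<in> Z \<Longrightarrow> X = c" "c \<in> Z"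
  then have "Z = {c}" by blast
  then show ?thesis by simp
qed

locale CONG =
  fixes A :: "('h, 'v, 'z) falg_scheme" and R S
  assumes cong: "congruence A R S"
begin

lemma eqR: "equiv (Hc A) R"
  using cong unfolding congruence_def by blast
lemma eqS: "equiv (Vc A) S"
  using cong unfolding congruence_def by blast

lemma cR: "(h1, h1') \<in> R \<Longrightarrow> (h2, h2') \<in> R \<Longrightarrow> (hadd A h1 h2, hadd A h1' h2') \<in> R"
  using cong unfolding congruence_def by blast
lemma cS: "(v1, v1') \<in> S \<Longrightarrow> (v2, v2') \<in> S \<Longrightarrow> (vmul A v1 v2, vmul A v1' v2') \<in> S"
  using cong unfolding congruence_def by blast
lemma cA: "(v, v') \<in> S \<Longrightarrow> (h, h') \<in> R \<Longrightarrow> (act A v h, act A v' h') \<in> R"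
  using cong unfolding congruence_def by blast
lemma cI: "(h, h') \<in> R \<Longrightarrow> (ins A h, ins A h') \<in> S"
  using cong unfolding congruence_def by blast

lemma selfR: "x \<in> Hc A \<Longrightarrow> x \<in> R `` {x}" and selfS: "v \<in> Vc A \<Longrightarrow> v \<in> S `` {v}"
  using eqR eqS by (auto simp: equiv_def refl_on_def)

lemma memR: "x' \<in> R `` {x} \<Longrightarrow> (x, x') \<in> R" and memS: "v' \<in> S `` {v} \<Longrightarrow> (v, v') \<in> S"
  by auto

lemma clsR: "(x, y) \<in> R \<Longrightarrow> R `` {y} = R `` {x}"
  using eqR equiv_class_eq by (metis equiv_def symD)
lemma clsS: "(x, y) \<in> S \<Longrightarrow> S `` {y} = S `` {x}"
  using eqS equiv_class_eq by (metis equiv_def symD)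

abbreviation "Q \<equiv> quotient_alg A R S"

lemma q_hadd: "x \<in> Hc A \<Longrightarrow> y \<in> Hc A \<Longrightarrow> hadd Q (R``{x}) (R``{y}) = R``{hadd A x y}"
  unfolding quot_sel
proof (rule Union_const)
  assume a: "x \<in> Hc A" "y \<in> Hc A"
  fix X assume "X \<in> {R `` {hadd A x' y'} |x' y'. x' \<in> R `` {x} \<and> y' \<in> R `` {y}}"
  then obtain x' y' where "X = R `` {hadd A x' y'}" "(x, x') \<in> R" "(y, y') \<in> R" by auto
  then show "X = R `` {hadd A x y}" using clsR[OF cR] by metis
next
  assume a: "x \<in> Hc A" "y \<in> Hc A"
  then show "R `` {hadd A x y} \<in> {R `` {hadd A x' y'} |x' y'. x' \<in> R `` {x} \<and> y' \<in> R `` {y}}"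
    using selfR by blast
qed

lemma q_vmul: "x \<in> Vc A \<Longrightarrow> y \<in> Vc A \<Longrightarrow> vmul Q (S``{x}) (S``{y}) = S``{vmul A x y}"
  unfolding quot_sel
proof (rule Union_const)
  assume a: "x \<in> Vc A" "y \<in> Vc A"
  fix X assume "X \<in> {S `` {vmul A x' y'} |x' y'. x' \<in> S `` {x} \<and> y' \<in> S `` {y}}"
  then obtain x' y' where "X = S `` {vmul A x' y'}" "(x, x') \<in> S" "(y, y') \<in> S" by auto
  then show "X = S `` {vmul A x y}" using clsS[OF cS] by metis
next
  assume a: "x \<in> Vc A" "y \<in> Vc A"
  then show "S `` {vmul A x y} \<in> {S `` {vmul A x' y'} |x' y'. x' \<in> S `` {x} \<and> y' \<in> S `` {y}}"
    using selfS by blast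
qed

lemma q_act: "x \<in> Vc A \<Longrightarrow> y \<in> Hc A \<Longrightarrow> act Q (S``{x}) (R``{y}) = R``{act A x y}"
  unfolding quot_sel
proof (rule Union_const)
  assume a: "x \<in> Vc A" "y \<in> Hc A"
  fix X assume "X \<in> {R `` {act A x' y'} |x' y'. x' \<in> S `` {x} \<and> y' \<in> R `` {y}}"
  then obtain x' y' where "X = R `` {act A x' y'}" "(x, x') \<in> S" "(y, y') \<in> R" by auto
  then show "X = R `` {act A x y}" using clsR[OF cA] by metis
next
  assume a: "x \<in> Vc A" "y \<in> Hc A"
  then show "R `` {act A x y} \<in> {R `` {act A x' y'} |x' y'. x' \<in> S `` {x} \<and> y' \<in> R `` {y}}"
    using selfS selfR by blast
qed

lemma q_ins: "y \<in> Hc A \<Longrightarrow> ins Q (R``{y}) = S``{ins A y}"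
  unfolding quot_sel
proof (rule Union_const)
  assume a: "y \<in> Hc A"
  fix X assume "X \<in> {S `` {ins A y'} |y'. y' \<in> R `` {y}}"
  then obtain y' where "X = S `` {ins A y'}" "(y, y') \<in> R" by auto
  then show "X = S `` {ins A y}" using clsS[OF cI] by metis
next
  assume a: "y \<in> Hc A"
  then show "S `` {ins A y} \<in> {S `` {ins A y'} |y'. y' \<in> R `` {y}}"
    using selfR by blast
qed

end

lemma divides_hom:
  assumes sub: "is_subalgebra W H V"
    and hom: "morphism (restrict_alg W H V) F \<theta> \<chi>"
    and sH: "\<theta> ` H = Hc F" and sV: "\<chi> ` V = Vc F"
  shows "divides F W"
proof -
  define R where "R = {(x, y). x \<in> H \<and> y \<in> H \<and> \<theta> x = \<theta> y}"
  define S where "S = {(x, y). x \<in> V \<and> y \<in> V \<and> \<chi> x = \<chi> y}"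
  have subH: "\<And>x y. x \<in> H \<Longrightarrow> y \<in> H \<Longrightarrow> hadd W x y \<in> H"
    and subV: "\<And>x y. x \<in> V \<Longrightarrow> y \<in> V \<Longrightarrow> vmul W x y \<in> V"
    and subA: "\<And>x y. x \<in> V \<Longrightarrow> y \<in> H \<Longrightarrow> act W x y \<in> H"
    and subI: "\<And>y. y \<in> H \<Longrightarrow> ins W y \<in> V"
    and sub0: "hzero W \<in> H" "vone W \<in> V"
    using sub unfolding is_subalgebra_def by auto
  have hH: "\<And>x y. x \<in> H \<Longrightarrow> y \<in> H \<Longrightarrow> \<theta> (hadd W x y) = hadd F (\<theta> x) (\<theta> y)"
    and hV: "\<And>x y. x \<in> V \<Longrightarrow> y \<in> V \<Longrightarrow> \<chi> (vmul W x y) = vmul F (\<chi> x) (\<chi> y)"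
    and hA: "\<And>x y. x \<in> V \<Longrightarrow> y \<in> H \<Longrightarrow> \<theta> (act W x y) = act F (\<chi> x) (\<theta> y)"
    and hI: "\<And>y. y \<in> H \<Longrightarrow> \<chi> (ins W y) = ins F (\<theta> y)"
    and h0: "\<theta> (hzero W) = hzero F" "\<chi> (vone W) = vone F"
    using hom unfolding morphism_def by auto
  let ?A = "restrict_alg W H V"
  have eR: "equiv H R" unfolding R_def equiv_def refl_on_def sym_def trans_def by auto
  have eS: "equiv V S" unfolding S_def equiv_def refl_on_def sym_def trans_def by auto
  have cong: "congruence ?A R S"
    unfolding congruence_def restrict_sel
  proof (intro conjI allI impI)
    show "equiv H R" "equiv V S" by (rule eR, rule eS)
  next
    fix h1 h2 h1' h2' assume "(h1, h1') \<in> R \<and> (h2, h2') \<in> R"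
    then show "(hadd W h1 h2, hadd W h1' h2') \<in> R" unfolding R_def using subH hH by auto
  next
    fix h1 h2 h1' h2' assume "(h1, h1') \<in> S \<and> (h2, h2') \<in> S"
    then show "(vmul W h1 h2, vmul W h1' h2') \<in> S" unfolding S_def using subV hV by auto
  next
    fix h1 h2 h1' h2' assume "(h1, h1') \<in> S \<and> (h2, h2') \<in> R"
    then show "(act W h1 h2, act W h1' h2') \<in> R" unfolding S_def R_def using subA hA by auto
  next
    fix h1 h1' assume "(h1, h1') \<in> R"
    then show "(ins W h1, ins W h1') \<in> S" unfolding S_def R_def using subI hI by auto
  qed
  interpret C: CONG ?A R S by (rule CONG.intro, rule cong)
  define \<Phi> where "\<Phi> X = \<theta> (SOME x. x \<in> X)" for X
  define \<Psi> where "\<Psi> X = \<chi> (SOME x. x \<in> X)" for X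
  have \<Phi>: "\<Phi> (R``{x}) = \<theta> x" if "x \<in> H" for x
  proof -
    have "x \<in> R``{x}" using C.selfR that by simp
    then have "(SOME y. y \<in> R``{x}) \<in> R``{x}" by (rule someI)
    then show ?thesis unfolding \<Phi>_def R_def by auto
  qed
  have \<Psi>: "\<Psi> (S``{x}) = \<chi> x" if "x \<in> V" for x
  proof -
    have "x \<in> S``{x}" using C.selfS that by simp
    then have "(SOME y. y \<in> S``{x}) \<in> S``{x}" by (rule someI)
    then show ?thesis unfolding \<Psi>_def S_def by auto
  qed
  have m: "morphism C.Q F \<Phi> \<Psi>"
    unfolding morphism_def quot_sel(1,2) restrict_sel
  proof (intro conjI ballI)
    fix X assume "X \<in> H // R" then obtain x where "x \<in> H" "X = R``{x}" by (auto elim: quotientE)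
    then show "\<Phi> X \<in> Hc F" using \<Phi> sH by auto
  next
    fix X assume "X \<in> V // S" then obtain x where "x \<in> V" "X = S``{x}" by (auto elim: quotientE)
    then show "\<Psi> X \<in> Vc F" using \<Psi> sV by auto
  next
    show "\<Phi> (hzero C.Q) = hzero F" using \<Phi> sub0 h0 by (simp add: quot_sel)
  next
    fix X Y assume "X \<in> H // R" "Y \<in> H // R"
    then obtain x y where "x \<in> H" "X = R``{x}" "y \<in> H" "Y = R``{y}" by (auto elim!: quotientE)
    then show "\<Phi> (hadd C.Q X Y) = hadd F (\<Phi> X) (\<Phi> Y)"
      using C.q_hadd \<Phi> hH subH by simp
  next
    show "\<Psi> (vone C.Q) = vone F" using \<Psi> sub0 h0 by (simp add: quot_sel)
  next
    fix X Y assume "X \<in> V // S" "Y \<in> V // S"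
    then obtain x y where "x \<in> V" "X = S``{x}" "y \<in> V" "Y = S``{y}" by (auto elim!: quotientE)
    then show "\<Psi> (vmul C.Q X Y) = vmul F (\<Psi> X) (\<Psi> Y)"
      using C.q_vmul \<Psi> hV subV by simp
  next
    fix X Y assume "X \<in> V // S" "Y \<in> H // R"
    then obtain x y where "x \<in> V" "X = S``{x}" "y \<in> H" "Y = R``{y}" by (auto elim!: quotientE)
    then show "\<Phi> (act C.Q X Y) = act F (\<Psi> X) (\<Phi> Y)"
      using C.q_act \<Phi> \<Psi> hA subA by simp
  next
    fix Y assume "Y \<in> H // R"
    then obtain y where "y \<in> H" "Y = R``{y}" by (auto elim!: quotientE)
    then show "\<Psi> (ins C.Q Y) = ins F (\<Phi> Y)"
      using C.q_ins \<Phi> \<Psi> hI subI by simp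
  qed
  have b1: "bij_betw \<Phi> (H // R) (Hc F)"
    unfolding bij_betw_def
  proof
    show "inj_on \<Phi> (H // R)"
    proof (rule inj_onI)
      fix X Y assume "X \<in> H // R" "Y \<in> H // R" "\<Phi> X = \<Phi> Y"
      then obtain x y where "x \<in> H" "X = R``{x}" "y \<in> H" "Y = R``{y}" "\<theta> x = \<theta> y"
        using \<Phi> by (auto elim!: quotientE)
      then show "X = Y" using C.clsR[of x y] by (simp add: R_def)
    qed
    show "\<Phi> ` (H // R) = Hc F"
    proof
      show "\<Phi> ` (H // R) \<subseteq> Hc F" using \<Phi> sH by (auto elim!: quotientE)
      show "Hc F \<subseteq> \<Phi> ` (H // R)"
      proof
        fix h assume "h \<in> Hc F"
        then obtain x where "x \<in> H" "h = \<theta> x" using sH by auto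
        then show "h \<in> \<Phi> ` (H // R)" using \<Phi> by (auto intro!: image_eqI[of _ _ "R``{x}"] quotientI)
      qed
    qed
  qed
  have b2: "bij_betw \<Psi> (V // S) (Vc F)"
    unfolding bij_betw_def
  proof
    show "inj_on \<Psi> (V // S)"
    proof (rule inj_onI)
      fix X Y assume "X \<in> V // S" "Y \<in> V // S" "\<Psi> X = \<Psi> Y"
      then obtain x y where "x \<in> V" "X = S``{x}" "y \<in> V" "Y = S``{y}" "\<chi> x = \<chi> y"
        using \<Psi> by (auto elim!: quotientE)
      then show "X = Y" using C.clsS[of x y] by (simp add: S_def)
    qed
    show "\<Psi> ` (V // S) = Vc F"
    proof
      show "\<Psi> ` (V // S) \<subseteq> Vc F" using \<Psi> sV by (auto elim!: quotientE)
      show "Vc F \<subseteq> \<Psi> ` (V // S)"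
      proof
        fix h assume "h \<in> Vc F"
        then obtain x where "x \<in> V" "h = \<chi> x" using sV by auto
        then show "h \<in> \<Psi> ` (V // S)" using \<Psi> by (auto intro!: image_eqI[of _ _ "S``{x}"] quotientI)
      qed
    qed
  qed
  have "isomorphism C.Q F \<Phi> \<Psi>"
    unfolding isomorphism_def using m b1 b2 by (simp add: quot_sel)
  then show ?thesis unfolding divides_def using sub cong by blast
qed

section \<open>Labelled paths and the absorption lemma\<close>

primrec glp :: "('a forest \<Rightarrow> 'k) \<Rightarrow> 'a tree \<Rightarrow> ('a \<times> 'k) list set" where
  "glp \<kappa> (Node a C) = insert [(a, \<kappa> C)] ((#) (a, \<kappa> C) ` \<Union> (fset (fimage (glp \<kappa>) C)))"

definition glps :: "('a forest \<Rightarrow> 'k) \<Rightarrow> 'a forest \<Rightarrow> ('a \<times> 'k) list set" where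
  "glps \<kappa> f = \<Union> (glp \<kappa> ` fset f)"

lemma glp_Node: "glp \<kappa> (Node a C) = insert [(a, \<kappa> C)] ((#) (a, \<kappa> C) ` glps \<kappa> C)"
  by (simp add: glps_def)
declare glp.simps[simp del]

lemma glp_nil[simp]: "[] \<notin> glp \<kappa> t"
  by (cases t) (auto simp: glp_Node)
lemma glps_nil[simp]: "[] \<notin> glps \<kappa> f"
  by (auto simp: glps_def)

lemma glps_union[simp]: "glps \<kappa> (f |\<union>| g) = glps \<kappa> f \<union> glps \<kappa> g"
  by (auto simp: glps_def)
lemma glps_insert[simp]: "glps \<kappa> (finsert t g) = glp \<kappa> t \<union> glps \<kappa> g"
  by (auto simp: glps_def)
lemma glps_empty[simp]: "glps \<kappa> {||} = {}"
  by (auto simp: glps_def)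
lemma glps_ffUnion: "glps \<kappa> (ffUnion Es) = (\<Union>E\<in>fset Es. glps \<kappa> E)"
  by (auto simp: glps_def ffUnion.rep_eq)

primrec kids :: "'a tree \<Rightarrow> 'a forest" where "kids (Node a C) = C"
primrec root :: "'a tree \<Rightarrow> 'a" where "root (Node a C) = a"

lemma flabels_ffUnion: "flabels (ffUnion Es) = (\<Union>E\<in>fset Es. flabels E)"
  by (auto simp: flabels_def ffUnion.rep_eq)

locale ABS = FEV A \<Sigma> \<sigma> for A :: "('h, 'v, 'z) falg_scheme" and \<Sigma> :: "'a set" and \<sigma> +
  fixes \<kappa> :: "'a forest \<Rightarrow> 'k"
  assumes kU: "\<And>E1 E2. flabels E1 \<subseteq> \<Sigma> \<Longrightarrow> flabels E2 \<subseteq> \<Sigma> \<Longrightarrow> \<kappa> E1 = \<kappa> E2 \<Longrightarrow> \<kappa> (E1 |\<union>| E2) = \<kappa> E1"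
    and hyp: "\<And>a E1 E2. a \<in> \<Sigma> \<Longrightarrow> flabels E1 \<subseteq> \<Sigma> \<Longrightarrow> flabels E2 \<subseteq> \<Sigma> \<Longrightarrow> \<kappa> E1 = \<kappa> E2 \<Longrightarrow>
       act A (\<sigma> a) (hadd A (fevs A \<sigma> E1) (fevs A \<sigma> E2)) =
       hadd A (act A (\<sigma> a) (fevs A \<sigma> E1)) (act A (\<sigma> a) (fevs A \<sigma> E2))"
begin

lemma multi:
  assumes "a \<in> \<Sigma>" "Es \<noteq> {||}" "\<And>E. E |\<in>| Es \<Longrightarrow> flabels E \<subseteq> \<Sigma> \<and> \<kappa> E = Y"
  shows "fevs A \<sigma> (fimage (Node a) Es) = fev A \<sigma> (Node a (ffUnion Es)) \<and> \<kappa> (ffUnion Es) = Y"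
  using assms(2,3)
proof (induction Es rule: fset_induct)
  case empty then show ?case by simp
next
  case (insert E Es)
  show ?case
  proof (cases "Es = {||}")
    case True
    then show ?thesis using insert.prems \<open>a \<in> \<Sigma>\<close> by (simp add: fevs_single)
  next
    case False
    have IH: "fevs A \<sigma> (fimage (Node a) Es) = fev A \<sigma> (Node a (ffUnion Es)) \<and> \<kappa> (ffUnion Es) = Y"
      using insert False by auto
    have lE: "flabels E \<subseteq> \<Sigma>" "\<kappa> E = Y" using insert.prems by auto
    have lU: "flabels (ffUnion Es) \<subseteq> \<Sigma>" using insert.prems by (auto simp: flabels_ffUnion)
    have lI: "flabels (fimage (Node a) Es) \<subseteq> \<Sigma>" using insert.prems \<open>a \<in> \<Sigma>\<close> by (auto simp: flabels_def)
    have "fevs A \<sigma> (fimage (Node a) (finsert E Es)) = hadd A (fev A \<sigma> (Node a E)) (fevs A \<sigma> (fimage (Node a) Es))"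
      using lE lI \<open>a \<in> \<Sigma>\<close> by (simp add: fevs_insert)
    also have "\<dots> = hadd A (act A (\<sigma> a) (fevs A \<sigma> E)) (act A (\<sigma> a) (fevs A \<sigma> (ffUnion Es)))"
      using IH by (simp add: fev_Node)
    also have "\<dots> = act A (\<sigma> a) (fevs A \<sigma> (E |\<union>| ffUnion Es))"
      using hyp[OF \<open>a \<in> \<Sigma>\<close> lE(1) lU] IH lE by (simp add: fevs_union lU)
    also have "\<dots> = fev A \<sigma> (Node a (ffUnion (finsert E Es)))"
      by (simp add: fev_Node)
    finally show ?thesis using kU[OF lE(1) lU] IH lE by simp
  qed
qed

lemma absorb:
  "tlabels t \<subseteq> \<Sigma> \<Longrightarrow> flabels f \<subseteq> \<Sigma> \<Longrightarrow> glp \<kappa> t \<subseteq> glps \<kappa> f \<Longrightarrow> fevs A \<sigma> (finsert t f) = fevs A \<sigma> f"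
proof (induction t arbitrary: f)
  case (Node a D)
  define Y where "Y = \<kappa> D"
  define T where "T = ffilter (\<lambda>s. root s = a \<and> \<kappa> (kids s) = Y) f"
  define Es where "Es = fimage kids T"
  define U where "U = ffUnion Es"
  have TEs: "fimage (Node a) Es = T"
  proof -
    have "\<And>s. s |\<in>| T \<Longrightarrow> Node a (kids s) = s" unfolding T_def
      by (case_tac s) auto
    then show ?thesis unfolding Es_def by (auto simp: fimage_iff)
  qed
  have Tf: "T |\<subseteq>| f" unfolding T_def by auto
  have aS: "a \<in> \<Sigma>" and lD: "flabels D \<subseteq> \<Sigma>" using Node.prems by auto
  have lT: "flabels T \<subseteq> \<Sigma>" using Tf Node.prems(2) unfolding flabels_def by auto
  have lEs: "\<And>E. E |\<in>| Es \<Longrightarrow> flabels E \<subseteq> \<Sigma> \<and> \<kappa> E = Y"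
  proof -
    fix E assume "E |\<in>| Es"
    then obtain s where s: "s |\<in>| T" "E = kids s" unfolding Es_def by auto
    then obtain b where "s = Node b E" by (cases s) auto
    moreover have "tlabels s \<subseteq> \<Sigma>" using s lT flabels_mem[of s T] by auto
    ultimately have "flabels E \<subseteq> \<Sigma>" by simp
    moreover have "\<kappa> E = Y" using s unfolding T_def by auto
    ultimately show "flabels E \<subseteq> \<Sigma> \<and> \<kappa> E = Y" by simp
  qed
  have nE: "Es \<noteq> {||}"
  proof -
    have "[(a, Y)] \<in> glps \<kappa> f" using Node.prems(3) by (auto simp: glp_Node Y_def)
    then obtain s where s: "s |\<in>| f" "[(a, Y)] \<in> glp \<kappa> s" by (auto simp: glps_def)
    then obtain b E where "s = Node b E" by (cases s) auto
    then have "s |\<in>| T" using s by (auto simp: glp_Node T_def)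
    then show ?thesis unfolding Es_def by auto
  qed
  have M: "fevs A \<sigma> T = fev A \<sigma> (Node a U)" "\<kappa> U = Y"
    using multi[OF aS nE lEs] TEs U_def by auto
  have lU: "flabels U \<subseteq> \<Sigma>" unfolding U_def using lEs by (auto simp: flabels_ffUnion)
  have gDU: "glps \<kappa> D \<subseteq> glps \<kappa> U"
  proof
    fix p assume "p \<in> glps \<kappa> D"
    then have "p \<noteq> []" by auto
    from \<open>p \<in> glps \<kappa> D\<close> have "(a, Y) # p \<in> glps \<kappa> f" using Node.prems(3) by (auto simp: glp_Node Y_def)
    then obtain s where s: "s |\<in>| f" "(a, Y) # p \<in> glp \<kappa> s" by (auto simp: glps_def)
    then obtain b E where sE: "s = Node b E" by (cases s) auto
    then have "b = a" "\<kappa> E = Y" "p \<in> glps \<kappa> E" using s \<open>p \<noteq> []\<close> by (auto simp: glp_Node)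
    then have sT: "s |\<in>| T" using s sE unfolding T_def by auto
    then have "kids s |\<in>| Es" unfolding Es_def by auto
    then have "E |\<in>| Es" using sE by simp
    then show "p \<in> glps \<kappa> U" using \<open>p \<in> glps \<kappa> E\<close> unfolding U_def glps_ffUnion by auto
  qed
  have DU: "fevs A \<sigma> (U |\<union>| D') = fevs A \<sigma> U" if "D' |\<subseteq>| D" for D'
    using that
  proof (induction D' rule: fset_induct)
    case empty then show ?case by simp
  next
    case (insert d D')
    have ld: "tlabels d \<subseteq> \<Sigma>" using insert.prems lD flabels_mem by fastforce
    have lD': "flabels D' \<subseteq> \<Sigma>" using insert.prems lD unfolding flabels_def by auto
    have "glp \<kappa> d \<subseteq> glps \<kappa> U" using gDU insert.prems by (auto simp: glps_def)
    then have "fevs A \<sigma> (finsert d (U |\<union>| D')) = fevs A \<sigma> (U |\<union>| D')"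
      using Node.IH[of d "U |\<union>| D'"] insert.prems ld lU lD' by auto
    then show ?case using insert by simp
  qed
  have "fevs A \<sigma> (finsert (Node a D) f) = hadd A (fev A \<sigma> (Node a D)) (fevs A \<sigma> f)"
    using Node.prems by (simp add: fevs_insert)
  also have fT: "fevs A \<sigma> f = hadd A (fevs A \<sigma> T) (fevs A \<sigma> f)"
  proof -
    have "f = T |\<union>| f" using Tf by auto
    then show ?thesis using fevs_union[OF lT Node.prems(2)] by metis
  qed
  also have "hadd A (fev A \<sigma> (Node a D)) (hadd A (fevs A \<sigma> T) (fevs A \<sigma> f))
      = hadd A (hadd A (fev A \<sigma> (Node a D)) (fevs A \<sigma> T)) (fevs A \<sigma> f)"
    using Node.prems lT by (simp add: hadd_assoc)
  also have "hadd A (fev A \<sigma> (Node a D)) (fevs A \<sigma> T) = fevs A \<sigma> T"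
  proof -
    have "hadd A (fev A \<sigma> (Node a D)) (fevs A \<sigma> T) = hadd A (act A (\<sigma> a) (fevs A \<sigma> D)) (act A (\<sigma> a) (fevs A \<sigma> U))"
      using M by (simp add: fev_Node)
    also have "\<dots> = act A (\<sigma> a) (fevs A \<sigma> (D |\<union>| U))"
      using hyp[OF aS lD lU] M Y_def by (simp add: fevs_union lD lU)
    also have "\<dots> = act A (\<sigma> a) (fevs A \<sigma> U)"
      using DU[of D] by (simp add: funion_commute)
    finally show ?thesis using M by (simp add: fev_Node)
  qed
  finally have X: "fevs A \<sigma> (finsert (Node a D) f) = hadd A (fevs A \<sigma> T) (fevs A \<sigma> f)" .
  show ?case by (simp only: X fT[symmetric])
qed

lemma glps_eq:
  assumes "flabels f \<subseteq> \<Sigma>" "flabels g \<subseteq> \<Sigma>" "glps \<kappa> f = glps \<kappa> g"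
  shows "fevs A \<sigma> f = fevs A \<sigma> g"
proof -
  have gen: "fevs A \<sigma> (f |\<union>| g') = fevs A \<sigma> f"
    if "flabels f \<subseteq> \<Sigma>" "flabels g \<subseteq> \<Sigma>" "glps \<kappa> g \<subseteq> glps \<kappa> f" "g' |\<subseteq>| g" for f g g'
    using that(4)
  proof (induction g' rule: fset_induct)
    case empty then show ?case by simp
  next
    case (insert t g')
    have lt: "tlabels t \<subseteq> \<Sigma>" using insert.prems that(2) flabels_mem by fastforce
    have lg': "flabels g' \<subseteq> \<Sigma>" using insert.prems that(2) unfolding flabels_def by auto
    have "glp \<kappa> t \<subseteq> glps \<kappa> (f |\<union>| g')" using that(3) insert.prems by (auto simp: glps_def)
    then have "fevs A \<sigma> (finsert t (f |\<union>| g')) = fevs A \<sigma> (f |\<union>| g')"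
      using absorb[of t "f |\<union>| g'"] lt lg' that(1) by auto
    then show ?case using insert by simp
  qed
  have "fevs A \<sigma> f = fevs A \<sigma> (f |\<union>| g)" using gen[of f g g] assms by simp
  also have "\<dots> = fevs A \<sigma> (g |\<union>| f)" by (simp add: funion_commute)
  also have "\<dots> = fevs A \<sigma> g" using gen[of g f f] assms by simp
  finally show ?thesis .
qed

end


lemma flabels_mono: "f |\<subseteq>| g \<Longrightarrow> flabels f \<subseteq> flabels g"
  by (auto simp: flabels_def)

lemma tpaths_Node: "tpaths (Node a X) = insert [a] ((#) a ` paths X)"
  by (simp add: paths_def)
declare tpaths.simps[simp del]

lemma paths_union[simp]: "paths (f |\<union>| g) = paths f \<union> paths g"
  by (auto simp: paths_def)
lemma paths_insert[simp]: "paths (finsert t g) = tpaths t \<union> paths g"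
  by (auto simp: paths_def)
lemma paths_empty[simp]: "paths {||} = {}"
  by (auto simp: paths_def)

lemma paths_fill_cong: "paths f = paths g \<Longrightarrow> paths (fill c f) = paths (fill c g)"
  by (induction c) (auto simp: tpaths_Node)

lemma glp_unit: "glp (\<lambda>_. ()) t = map (\<lambda>a. (a, ())) ` tpaths t"
proof (induction t)
  case (Node a C)
  have "glps (\<lambda>_. ()) C = map (\<lambda>a. (a, ())) ` paths C"
    using Node by (auto simp: glps_def paths_def)
  then show ?case by (auto simp: glp_Node tpaths_Node image_image)
qed

lemma glps_unit: "glps (\<lambda>_. ()) f = map (\<lambda>a. (a, ())) ` paths f"
  by (auto simp: glps_def paths_def glp_unit)

lemma (in FEV) dist_paths:
  assumes dist: "distributive A" and l: "flabels f \<subseteq> \<Sigma>" "flabels g \<subseteq> \<Sigma>" and p: "paths f = paths g"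
  shows "fevs A \<sigma> f = fevs A \<sigma> g"
proof -
  interpret ABS A \<Sigma> \<sigma> "\<lambda>_. ()"
    by (unfold_locales) (use dist in \<open>auto simp: distributive_def\<close>)
  show ?thesis using glps_eq[OF l] p by (simp add: glps_unit)
qed

lemma wr_hadd_fst: "fst (hadd (wreath G1 G2) x y) = hadd G1 (fst x) (fst y)"
  and wr_hadd_snd: "snd (hadd (wreath G1 G2) x y) = hadd G2 (snd x) (snd y)"
  by (cases x; cases y; simp)+
lemma wr_act_fst: "fst (act (wreath G1 G2) v x) = act G1 (fst v (snd x)) (fst x)"
  and wr_act_snd: "snd (act (wreath G1 G2) v x) = act G2 (snd v) (snd x)"
  by (cases x; cases v; simp)+

lemma snd_fevs:
  assumes A1: "forest_algebra G1" and A2: "forest_algebra G2"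
    and sig: "\<sigma> ` \<Sigma> \<subseteq> Vc (wreath G1 G2)" and s2: "\<sigma>2 = snd \<circ> \<sigma>"
  shows "flabels f \<subseteq> \<Sigma> \<Longrightarrow> snd (fevs (wreath G1 G2) \<sigma> f) = fevs G2 \<sigma>2 f"
proof -
  interpret W: FEV "wreath G1 G2" \<Sigma> \<sigma>
    by (intro FEV.intro FA.intro FEV_axioms.intro wreath_fa A1 A2 sig)
  interpret G: FEV G2 \<Sigma> \<sigma>2
    by (intro FEV.intro FA.intro FEV_axioms.intro A2) (use sig s2 in auto)
  have tr: "tlabels t \<subseteq> \<Sigma> \<Longrightarrow> snd (fev (wreath G1 G2) \<sigma> t) = fev G2 \<sigma>2 t" for t
  proof (induction t)
    case (Node a C)
    have "snd (fevs (wreath G1 G2) \<sigma> C') = fevs G2 \<sigma>2 C'" if "C' |\<subseteq>| C" for C'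
      using that
    proof (induction C' rule: fset_induct)
      case empty then show ?case by simp
    next
      case (insert t C')
      have lt: "tlabels t \<subseteq> \<Sigma>" using insert.prems Node.prems flabels_mem by fastforce
      have lC: "flabels C' \<subseteq> \<Sigma>" using insert.prems Node.prems flabels_mono[of C' C] by auto
      show ?case using insert Node.IH[of t] lt lC
        by (simp add: W.fevs_insert G.fevs_insert wr_hadd_snd)
    qed
    moreover have "\<sigma>2 a = snd (\<sigma> a)" using s2 by simp
    ultimately show ?case by (simp add: fev_Node wr_act_snd)
  qed
  show "flabels f \<subseteq> \<Sigma> \<Longrightarrow> snd (fevs (wreath G1 G2) \<sigma> f) = fevs G2 \<sigma>2 f"
  proof (induction f rule: fset_induct)
    case empty then show ?case by simp
  next
    case (insert t f)
    then show ?case using tr[of t] by (simp add: W.fevs_insert G.fevs_insert wr_hadd_snd)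
  qed
qed

lemma wreath_2dist_core:
  assumes A1: "forest_algebra G1" and A2: "forest_algebra G2"
    and D1: "distributive G1" and D2: "distributive G2"
    and sig: "\<sigma> ` \<Sigma> \<subseteq> Vc (wreath G1 G2)"
    and l: "clabels v \<subseteq> \<Sigma>" "flabels f1 \<subseteq> \<Sigma>" "flabels f2 \<subseteq> \<Sigma>" and p: "paths f1 = paths f2"
  shows "fevs (wreath G1 G2) \<sigma> (fill v (f1 |\<union>| f2)) = fevs (wreath G1 G2) \<sigma> (fill v f1 |\<union>| fill v f2)"
  using l(1)
proof (induction v)
  case (CHole F0)
  have "fill (CHole F0) (f1 |\<union>| f2) = fill (CHole F0) f1 |\<union>| fill (CHole F0) f2" by auto
  then show ?case by simp
next
  case (CNode F0 a c)
  let ?W = "wreath G1 G2"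
  interpret W: FEV ?W \<Sigma> \<sigma>
    by (intro FEV.intro FA.intro FEV_axioms.intro wreath_fa A1 A2 sig)
  interpret G: FEV G2 \<Sigma> "snd \<circ> \<sigma>"
    by (intro FEV.intro FA.intro FEV_axioms.intro A2) (use sig in auto)
  note sf = snd_fevs[OF A1 A2 sig refl]
  interpret G1: FA G1 by (rule FA.intro, rule A1)
  interpret G2: FA G2 by (rule FA.intro, rule A2)
  define X where "X = fill c (f1 |\<union>| f2)"
  define Y1 where "Y1 = fill c f1"
  define Y2 where "Y2 = fill c f2"
  have lX: "flabels X \<subseteq> \<Sigma>" "flabels Y1 \<subseteq> \<Sigma>" "flabels Y2 \<subseteq> \<Sigma>" "flabels F0 \<subseteq> \<Sigma>" "a \<in> \<Sigma>"
    using CNode.prems l unfolding X_def Y1_def Y2_def by auto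
  have IH: "fevs ?W \<sigma> X = fevs ?W \<sigma> (Y1 |\<union>| Y2)"
    using CNode.IH CNode.prems unfolding X_def Y1_def Y2_def by auto
  have pY: "paths Y1 = paths Y2" using paths_fill_cong[OF p] unfolding Y1_def Y2_def .
  have sY: "snd (fevs ?W \<sigma> Y1) = snd (fevs ?W \<sigma> Y2)"
    using sf[OF lX(2)] sf[OF lX(3)] G.dist_paths[OF D2 lX(2) lX(3) pY]
    by simp
  obtain p1 q1 where y1: "fevs ?W \<sigma> Y1 = (p1, q1)" by fastforce
  obtain p2 q2 where y2: "fevs ?W \<sigma> Y2 = (p2, q2)" by fastforce
  have q: "q2 = q1" using sY y1 y2 by simp
  have inY: "p1 \<in> Hc G1" "p2 \<in> Hc G1" "q1 \<in> Hc G2"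
    using W.fevs_c[OF lX(2)] W.fevs_c[OF lX(3)] y1 y2 q by auto
  obtain g u where sa: "\<sigma> a = (g, u)" by fastforce
  have gu: "g \<in> Hc G2 \<rightarrow>\<^sub>E Vc G1" "u \<in> Vc G2" using W.sig_in[OF lX(5)] sa by auto
  have gq: "g q1 \<in> Vc G1" using gu inY by auto
  have key: "fev ?W \<sigma> (Node a X) = hadd ?W (fev ?W \<sigma> (Node a Y1)) (fev ?W \<sigma> (Node a Y2))"
  proof -
    have "fev ?W \<sigma> (Node a X) = act ?W (g, u) (hadd ?W (p1, q1) (p2, q1))"
      using IH y1 y2 q sa lX by (simp add: fev_Node W.fevs_union)
    also have "\<dots> = hadd ?W (act ?W (g, u) (p1, q1)) (act ?W (g, u) (p2, q1))"
      using D1 gq inY gu unfolding distributive_def by simp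
    also have "\<dots> = hadd ?W (fev ?W \<sigma> (Node a Y1)) (fev ?W \<sigma> (Node a Y2))"
      using y1 y2 q sa by (simp add: fev_Node)
    finally show ?thesis .
  qed
  have lN: "tlabels (Node a X) \<subseteq> \<Sigma>" "tlabels (Node a Y1) \<subseteq> \<Sigma>" "tlabels (Node a Y2) \<subseteq> \<Sigma>"
    using lX by auto
  have e1: "fill (CNode F0 a c) (f1 |\<union>| f2) = finsert (Node a X) F0" unfolding X_def by auto
  have e2: "fill (CNode F0 a c) f1 |\<union>| fill (CNode F0 a c) f2 = finsert (Node a Y1) (finsert (Node a Y2) F0)"
    unfolding Y1_def Y2_def by auto
  have "fevs ?W \<sigma> (fill (CNode F0 a c) (f1 |\<union>| f2)) = hadd ?W (fev ?W \<sigma> (Node a X)) (fevs ?W \<sigma> F0)"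
    using lX lN unfolding e1 by (simp add: W.fevs_insert)
  also have "\<dots> = hadd ?W (fev ?W \<sigma> (Node a Y1)) (hadd ?W (fev ?W \<sigma> (Node a Y2)) (fevs ?W \<sigma> F0))"
    using key lX lN W.fevs_c W.fev_c by (simp add: W.hadd_assoc)
  also have "\<dots> = fevs ?W \<sigma> (fill (CNode F0 a c) f1 |\<union>| fill (CNode F0 a c) f2)"
    using lX lN unfolding e2 by (simp add: W.fevs_insert)
  finally show ?case .
qed


lemma forest_induct:
  assumes e: "P {||}" and i: "\<And>t f. P {|t|} \<Longrightarrow> P f \<Longrightarrow> P (finsert t f)"
    and n: "\<And>a C. P C \<Longrightarrow> P {|Node a C|}"
  shows "P f"
proof -
  have s: "P {|t|}" for t
  proof (induction t)
    case (Node a C)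
    have "P C'" if "C' |\<subseteq>| C" for C'
      using that
    proof (induction C' rule: fset_induct)
      case empty then show ?case using e by simp
    next
      case (insert t C') then show ?case using Node.IH i by auto
    qed
    then show ?case using n by auto
  qed
  show ?thesis
  proof (induction f rule: fset_induct)
    case empty then show ?case using e by simp
  next
    case (insert t f) then show ?case using s i by auto
  qed
qed

lemma dir1:
  assumes FF: "forest_algebra F" and A1: "forest_algebra G1" and A2: "forest_algebra G2"
    and D1: "distributive G1" and D2: "distributive G2"
    and dv: "divides F (wreath G1 G2)"
  shows "two_distributive F"
proof -
  let ?W = "wreath G1 G2"
  from dv obtain H V R S \<theta> \<chi> where sub: "is_subalgebra ?W H V"
    and cong: "congruence (restrict_alg ?W H V) R S"
    and iso: "isomorphism (quotient_alg (restrict_alg ?W H V) R S) F \<theta> \<chi>"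
    unfolding divides_def by blast
  interpret C: CONG "restrict_alg ?W H V" R S by (rule CONG.intro, rule cong)
  interpret WA: FA ?W by (rule FA.intro, rule wreath_fa[OF A1 A2])
  have m\<theta>: "morphism C.Q F \<theta> \<chi>" and bV: "bij_betw \<chi> (V // S) (Vc F)"
    using iso unfolding isomorphism_def quot_sel(1,2) restrict_sel by auto
  have \<theta>0: "\<theta> (hzero C.Q) = hzero F"
    and \<theta>add: "\<And>X Y. X \<in> H // R \<Longrightarrow> Y \<in> H // R \<Longrightarrow> \<theta> (hadd C.Q X Y) = hadd F (\<theta> X) (\<theta> Y)"
    and \<theta>act: "\<And>X Y. X \<in> V // S \<Longrightarrow> Y \<in> H // R \<Longrightarrow> \<theta> (act C.Q X Y) = act F (\<chi> X) (\<theta> Y)"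
    using m\<theta> unfolding morphism_def quot_sel(1,2) restrict_sel by auto
  have HW: "H \<subseteq> Hc ?W" and VW: "V \<subseteq> Vc ?W" and H0: "hzero ?W \<in> H"
    and Hadd: "\<And>x y. x \<in> H \<Longrightarrow> y \<in> H \<Longrightarrow> hadd ?W x y \<in> H"
    and Hact: "\<And>x y. x \<in> V \<Longrightarrow> y \<in> H \<Longrightarrow> act ?W x y \<in> H"
    using sub unfolding is_subalgebra_def by auto
  show ?thesis unfolding two_distributive_def
  proof (intro allI impI ballI)
    fix \<Sigma> :: "nat set" and \<phi> \<psi> v f1 f2
    assume mor: "morphism (free_falg \<Sigma>) F \<phi> \<psi>" and vin: "v \<in> Vc (free_falg \<Sigma>)"
      and f1in: "f1 \<in> Hc (free_falg \<Sigma>)" and f2in: "f2 \<in> Hc (free_falg \<Sigma>)" and p: "paths f1 = paths f2"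
    have lv: "clabels v \<subseteq> \<Sigma>" and lf: "flabels f1 \<subseteq> \<Sigma>" "flabels f2 \<subseteq> \<Sigma>"
      using vin f1in f2in by (auto simp: free_falg_def)
    have \<phi>0: "\<phi> {||} = hzero F"
      and \<phi>add: "\<And>f g. flabels f \<subseteq> \<Sigma> \<Longrightarrow> flabels g \<subseteq> \<Sigma> \<Longrightarrow> \<phi> (f |\<union>| g) = hadd F (\<phi> f) (\<phi> g)"
      and \<phi>act: "\<And>c f. clabels c \<subseteq> \<Sigma> \<Longrightarrow> flabels f \<subseteq> \<Sigma> \<Longrightarrow> \<phi> (fill c f) = act F (\<psi> c) (\<phi> f)"
      and \<psi>in: "\<And>c. clabels c \<subseteq> \<Sigma> \<Longrightarrow> \<psi> c \<in> Vc F"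
      using mor unfolding morphism_def free_falg_def by auto
    define lt where "lt a = CNode {||} a (CHole {||})" for a :: nat
    have ex: "\<exists>x. x \<in> V \<and> \<chi> (S``{x}) = \<psi> (lt a)" if "a \<in> \<Sigma>" for a
    proof -
      have "\<psi> (lt a) \<in> Vc F" using \<psi>in that by (auto simp: lt_def)
      then have "\<psi> (lt a) \<in> \<chi> ` (V // S)" using bV by (simp add: bij_betw_def)
      then obtain K where "K \<in> V // S" "\<chi> K = \<psi> (lt a)" by (auto elim!: imageE)
      then show ?thesis by (auto elim!: quotientE)
    qed
    define \<sigma> where "\<sigma> a = (SOME x. x \<in> V \<and> \<chi> (S``{x}) = \<psi> (lt a))" for a
    have \<sigma>: "\<sigma> a \<in> V \<and> \<chi> (S``{\<sigma> a}) = \<psi> (lt a)" if "a \<in> \<Sigma>" for a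
      unfolding \<sigma>_def by (rule someI_ex, rule ex[OF that])
    have sig: "\<sigma> ` \<Sigma> \<subseteq> Vc ?W"
    proof
      fix x assume "x \<in> \<sigma> ` \<Sigma>"
      then have "x \<in> V" using \<sigma> by auto
      then show "x \<in> Vc ?W" by (rule subsetD[OF VW])
    qed
    interpret W: FEV ?W \<Sigma> \<sigma> by (intro FEV.intro FA.intro FEV_axioms.intro wreath_fa A1 A2 sig)
    have inH: "flabels f \<subseteq> \<Sigma> \<longrightarrow> fevs ?W \<sigma> f \<in> H" for f
    proof (induction f rule: forest_induct)
      case 1 then show ?case using H0 by simp
    next
      case (2 t f)
      show ?case
      proof
        assume l: "flabels (finsert t f) \<subseteq> \<Sigma>"
        then have l1: "flabels {|t|} \<subseteq> \<Sigma>" "flabels f \<subseteq> \<Sigma>" "tlabels t \<subseteq> \<Sigma>" by auto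
        have "fevs ?W \<sigma> (finsert t f) = hadd ?W (fevs ?W \<sigma> {|t|}) (fevs ?W \<sigma> f)"
          using l1 W.fevs_single[of t] W.fevs_insert[of t f] by simp
        then show "fevs ?W \<sigma> (finsert t f) \<in> H" using 2 l1 Hadd by simp
      qed
    next
      case (3 a C)
      show ?case
      proof
        assume l: "flabels {|Node a C|} \<subseteq> \<Sigma>"
        then have aS: "a \<in> \<Sigma>" and lC: "flabels C \<subseteq> \<Sigma>" by auto
        have "fevs ?W \<sigma> {|Node a C|} = act ?W (\<sigma> a) (fevs ?W \<sigma> C)"
          using l by (simp add: W.fevs_single fev_Node)
        then show "fevs ?W \<sigma> {|Node a C|} \<in> H" using 3 lC aS \<sigma> Hact by simp
      qed
    qed
    have cB: "flabels f \<subseteq> \<Sigma> \<longrightarrow> \<theta> (R``{fevs ?W \<sigma> f}) = \<phi> f" for f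
    proof (induction f rule: forest_induct)
      case 1 then show ?case using \<theta>0 \<phi>0 by (simp add: quot_sel(4))
    next
      case (2 t f)
      show ?case
      proof
        assume l: "flabels (finsert t f) \<subseteq> \<Sigma>"
        then have l1: "flabels {|t|} \<subseteq> \<Sigma>" "flabels f \<subseteq> \<Sigma>" "tlabels t \<subseteq> \<Sigma>" by auto
        have h1: "fevs ?W \<sigma> {|t|} \<in> H" "fevs ?W \<sigma> f \<in> H" using inH l1 by auto
        have "R``{fevs ?W \<sigma> (finsert t f)} = hadd C.Q (R``{fevs ?W \<sigma> {|t|}}) (R``{fevs ?W \<sigma> f})"
          using C.q_hadd[of "fevs ?W \<sigma> {|t|}" "fevs ?W \<sigma> f"] h1 l1
            W.fevs_single[of t] W.fevs_insert[of t f] by simp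
        then have "\<theta> (R``{fevs ?W \<sigma> (finsert t f)}) = hadd F (\<theta> (R``{fevs ?W \<sigma> {|t|}})) (\<theta> (R``{fevs ?W \<sigma> f}))"
          using \<theta>add h1 by (simp add: quotientI del: quot_sel)
        also have "\<dots> = hadd F (\<phi> {|t|}) (\<phi> f)" using 2 l1 by simp
        also have "\<dots> = \<phi> (finsert t f)" using \<phi>add[OF l1(1,2)] by simp
        finally show "\<theta> (R``{fevs ?W \<sigma> (finsert t f)}) = \<phi> (finsert t f)" .
      qed
    next
      case (3 a C)
      show ?case
      proof
        assume l: "flabels {|Node a C|} \<subseteq> \<Sigma>"
        then have aS: "a \<in> \<Sigma>" and lC: "flabels C \<subseteq> \<Sigma>" by auto
        have hC: "fevs ?W \<sigma> C \<in> H" using inH lC by auto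
        have sa: "\<sigma> a \<in> V" "\<chi> (S``{\<sigma> a}) = \<psi> (lt a)" using \<sigma> aS by auto
        have "R``{fevs ?W \<sigma> {|Node a C|}} = act C.Q (S``{\<sigma> a}) (R``{fevs ?W \<sigma> C})"
          using C.q_act[of "\<sigma> a" "fevs ?W \<sigma> C"] hC sa l
          by (simp add: W.fevs_single fev_Node)
        then have "\<theta> (R``{fevs ?W \<sigma> {|Node a C|}}) = act F (\<chi> (S``{\<sigma> a})) (\<theta> (R``{fevs ?W \<sigma> C}))"
          using \<theta>act hC sa by (simp add: quotientI)
        also have "\<dots> = act F (\<psi> (lt a)) (\<phi> C)" using 3 lC sa by simp
        also have "\<dots> = \<phi> (fill (lt a) C)" using \<phi>act[of "lt a" C] aS lC by (simp add: lt_def)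
        also have "fill (lt a) C = {|Node a C|}" by (simp add: lt_def)
        finally show "\<theta> (R``{fevs ?W \<sigma> {|Node a C|}}) = \<phi> {|Node a C|}" .
      qed
    qed
    have l3: "flabels (fill v (f1 |\<union>| f2)) \<subseteq> \<Sigma>" "flabels (fill v f1 |\<union>| fill v f2) \<subseteq> \<Sigma>"
      using lv lf by auto
    have "\<phi> (fill v (f1 |\<union>| f2)) = \<theta> (R``{fevs ?W \<sigma> (fill v (f1 |\<union>| f2))})" using cB l3 by simp
    also have "\<dots> = \<theta> (R``{fevs ?W \<sigma> (fill v f1 |\<union>| fill v f2)})"
      using wreath_2dist_core[OF A1 A2 D1 D2 sig lv lf p] by simp
    also have "\<dots> = \<phi> (fill v f1 |\<union>| fill v f2)" using cB l3 by simp
    finally show "\<phi> (fill v (f1 |\<union>| f2)) = \<phi> (fill v f1 |\<union>| fill v f2)" .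
  qed
qed




section \<open>The free distributive forest algebra of path sets\<close>

definition freeD :: "('c list fset, 'c list fset \<times> 'c list) falg" where
  "freeD = \<lparr> Hc = UNIV, Vc = UNIV, hadd = (|\<union>|), hzero = {||},
     vmul = (\<lambda>(Q, w) (Q', w'). (Q |\<union>| fimage ((@) w) Q', w @ w')), vone = ({||}, []),
     act = (\<lambda>(Q, w) X. Q |\<union>| fimage ((@) w) X), ins = (\<lambda>X. (X, [])) \<rparr>"

lemma freeD_sel[simp]:
  "Hc freeD = UNIV" "Vc freeD = UNIV" "hadd freeD X Y = X |\<union>| Y" "hzero freeD = {||}"
  "vmul freeD (Q, w) (Q', w') = (Q |\<union>| fimage ((@) w) Q', w @ w')" "vone freeD = ({||}, [])"
  "act freeD (Q, w) X = Q |\<union>| fimage ((@) w) X" "ins freeD X = (X, [])"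
  by (simp_all add: freeD_def)

lemma long_word: "\<exists>n. w @ replicate n c \<notin> fset Q"
proof (rule ccontr)
  assume "\<not> ?thesis"
  then have "range (\<lambda>n. w @ replicate n c) \<subseteq> fset Q" by auto
  then have "finite (range (\<lambda>n. w @ replicate n c))" by (rule finite_subset) simp
  moreover have "inj (\<lambda>n. w @ replicate n c)" by (rule injI) (metis append_eq_append_conv length_replicate)
  ultimately have "finite (UNIV :: nat set)" using finite_imageD by blast
  then show False by simp
qed

lemma freeD_fa: "forest_algebra (freeD :: ('c list fset, 'c list fset \<times> 'c list) falg)"
proof -
  have faith: "v = v'" if "\<And>X. act (freeD :: ('c list fset, 'c list fset \<times> 'c list) falg) v X = act freeD v' X" for v v'
  proof (cases v, cases v')
    fix Q w Q' w' assume vv: "v = (Q, w)" "v' = (Q', w')"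
    have eq: "Q |\<union>| fimage ((@) w) X = Q' |\<union>| fimage ((@) w') X" for X
    proof -
      have "act (freeD :: ('c list fset, 'c list fset \<times> 'c list) falg) v X = act freeD v' X" by (rule that)
      then show ?thesis unfolding vv freeD_sel .
    qed
    have QQ: "Q = Q'" using eq[of "{||}"] by simp
    obtain n where n: "w @ replicate n (undefined :: 'c) \<notin> fset Q" using long_word[of w "undefined :: 'c" Q] by (elim exE)
    define r where "r = replicate n (undefined :: 'c)"
    have e2: "Q |\<union>| {|w @ r|} = Q' |\<union>| {|w' @ r|}" using eq[of "{|r|}"] by simp
    have "w @ r |\<in>| Q |\<union>| {|w @ r|}" by simp
    then have "w @ r |\<in>| Q' |\<union>| {|w' @ r|}" by (simp only: e2)
    then have "w @ r = w' @ r" using n QQ unfolding r_def by auto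
    then have "w = w'" by simp
    then show ?thesis using QQ vv by simp
  qed
  let ?D = "freeD :: ('c list fset, 'c list fset \<times> 'c list) falg"
  have ap: "\<And>b c. ((@) (b @ c) :: 'c list \<Rightarrow> 'c list) = (\<lambda>x. b @ c @ x)" by (simp add: fun_eq_iff)
  have m5: "\<forall>a\<in>Vc ?D. \<forall>b\<in>Vc ?D. \<forall>c\<in>Vc ?D. vmul ?D (vmul ?D a b) c = vmul ?D a (vmul ?D b c)"
    by (clarsimp simp: fimage_funion fimage_fimage funion_assoc comp_def ap)
  have m6: "\<forall>a\<in>Vc ?D. vmul ?D (vone ?D) a = a \<and> vmul ?D a (vone ?D) = a"
    by (clarsimp simp: fset.map_ident_strong)
  have m7: "\<forall>v\<in>Vc ?D. \<forall>w\<in>Vc ?D. \<forall>h\<in>Hc ?D. act ?D (vmul ?D v w) h = act ?D v (act ?D w h)"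
    by (clarsimp simp: fimage_funion fimage_fimage funion_assoc comp_def ap)
  have m8: "\<forall>h\<in>Hc ?D. act ?D (vone ?D) h = h" by (clarsimp simp: fset.map_ident_strong)
  have m9: "\<forall>v\<in>Vc ?D. \<forall>w\<in>Vc ?D. (\<forall>h\<in>Hc ?D. act ?D v h = act ?D w h) \<longrightarrow> v = w"
    using faith by simp
  have m11: "\<forall>h\<in>Hc ?D. \<exists>v\<in>Vc ?D. h = act ?D v (hzero ?D)"
    by (intro ballI bexI[of _ "(_, [])"]) simp_all
  have m1: "\<forall>a\<in>Hc ?D. \<forall>b\<in>Hc ?D. \<forall>c\<in>Hc ?D. hadd ?D (hadd ?D a b) c = hadd ?D a (hadd ?D b c)"
    by (simp add: funion_assoc)
  have m3: "\<forall>a\<in>Hc ?D. \<forall>b\<in>Hc ?D. hadd ?D a b = hadd ?D b a"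
    by (simp add: funion_commute)
  show ?thesis unfolding forest_algebra_def
    using m1 m3 m5 m6 m7 m8 m9 m11 by simp
qed

lemma freeD_dist: "distributive (freeD :: ('c list fset, 'c list fset \<times> 'c list) falg)"
  unfolding distributive_def by (auto simp: fimage_funion)


section \<open>Transport along injections\<close>

definition transp :: "('h, 'v, 'z) falg_scheme \<Rightarrow> ('h \<Rightarrow> 'p) \<Rightarrow> ('v \<Rightarrow> 'q) \<Rightarrow> ('p, 'q) falg" where
  "transp A i j = \<lparr> Hc = i ` Hc A, Vc = j ` Vc A,
     hadd = (\<lambda>x y. i (hadd A (inv_into (Hc A) i x) (inv_into (Hc A) i y))), hzero = i (hzero A),
     vmul = (\<lambda>x y. j (vmul A (inv_into (Vc A) j x) (inv_into (Vc A) j y))), vone = j (vone A),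
     act = (\<lambda>x y. i (act A (inv_into (Vc A) j x) (inv_into (Hc A) i y))),
     ins = (\<lambda>x. j (ins A (inv_into (Hc A) i x))) \<rparr>"

lemma ball_img: "(\<forall>x\<in>f ` A. P x) = (\<forall>x\<in>A. P (f x))" by auto
lemma bex_img: "(\<exists>x\<in>f ` A. P x) = (\<exists>x\<in>A. P (f x))" by auto

locale TR = FA A for A :: "('h, 'v, 'z) falg_scheme" +
  fixes i :: "'h \<Rightarrow> 'p" and j :: "'v \<Rightarrow> 'q"
  assumes ii: "inj_on i (Hc A)" and jj: "inj_on j (Vc A)"
begin

abbreviation "T \<equiv> transp A i j"

lemma iv[simp]: "x \<in> Hc A \<Longrightarrow> inv_into (Hc A) i (i x) = x"
  using ii by (simp add: inv_into_f_f)
lemma jv[simp]: "x \<in> Vc A \<Longrightarrow> inv_into (Vc A) j (j x) = x"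
  using jj by (simp add: inv_into_f_f)
lemma ieq[simp]: "x \<in> Hc A \<Longrightarrow> y \<in> Hc A \<Longrightarrow> i x = i y \<longleftrightarrow> x = y"
  using ii by (auto dest: inj_onD)
lemma jeq[simp]: "x \<in> Vc A \<Longrightarrow> y \<in> Vc A \<Longrightarrow> j x = j y \<longleftrightarrow> x = y"
  using jj by (auto dest: inj_onD)

lemma T_sel:
  "Hc T = i ` Hc A" "Vc T = j ` Vc A" "hzero T = i (hzero A)" "vone T = j (vone A)"
  "x \<in> Hc A \<Longrightarrow> y \<in> Hc A \<Longrightarrow> hadd T (i x) (i y) = i (hadd A x y)"
  "u \<in> Vc A \<Longrightarrow> w \<in> Vc A \<Longrightarrow> vmul T (j u) (j w) = j (vmul A u w)"
  "u \<in> Vc A \<Longrightarrow> y \<in> Hc A \<Longrightarrow> act T (j u) (i y) = i (act A u y)"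
  "y \<in> Hc A \<Longrightarrow> ins T (i y) = j (ins A y)"
  by (simp_all add: transp_def)

lemma T_fa: "forest_algebra T"
proof -
  note S = T_sel ball_img bex_img
  have c: "hzero T \<in> Hc T" "vone T \<in> Vc T" by (simp_all add: S)
  have c2: "\<forall>h\<in>Hc T. \<forall>h'\<in>Hc T. hadd T h h' \<in> Hc T" by (simp add: S)
  have c3: "\<forall>v\<in>Vc T. \<forall>w\<in>Vc T. vmul T v w \<in> Vc T" by (simp add: S)
  have c4: "\<forall>v\<in>Vc T. \<forall>h\<in>Hc T. act T v h \<in> Hc T" by (simp add: S)
  have c5: "\<forall>h\<in>Hc T. ins T h \<in> Vc T" by (simp add: S)
  have m1: "\<forall>a\<in>Hc T. \<forall>b\<in>Hc T. \<forall>c\<in>Hc T. hadd T (hadd T a b) c = hadd T a (hadd T b c)"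
    by (simp add: S hadd_assoc)
  have m2: "\<forall>a\<in>Hc T. hadd T (hzero T) a = a \<and> hadd T a (hzero T) = a" by (simp add: S)
  have m3: "\<forall>a\<in>Hc T. \<forall>b\<in>Hc T. hadd T a b = hadd T b a" by (simp add: S hadd_comm)
  have m4: "\<forall>a\<in>Hc T. hadd T a a = a" by (simp add: S)
  have m5: "\<forall>a\<in>Vc T. \<forall>b\<in>Vc T. \<forall>c\<in>Vc T. vmul T (vmul T a b) c = vmul T a (vmul T b c)"
    by (simp add: S vmul_assoc)
  have m6: "\<forall>a\<in>Vc T. vmul T (vone T) a = a \<and> vmul T a (vone T) = a" by (simp add: S)
  have m7: "\<forall>v\<in>Vc T. \<forall>w\<in>Vc T. \<forall>h\<in>Hc T. act T (vmul T v w) h = act T v (act T w h)"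
    by (simp add: S act_mul)
  have m8: "\<forall>h\<in>Hc T. act T (vone T) h = h" by (simp add: S)
  have m9: "\<forall>v\<in>Vc T. \<forall>w\<in>Vc T. (\<forall>h\<in>Hc T. act T v h = act T w h) \<longrightarrow> v = w"
    by (simp add: S) (metis faithful)
  have m10: "\<forall>h\<in>Hc T. \<forall>h'\<in>Hc T. act T (ins T h) h' = hadd T h h'" by (simp add: S act_ins)
  have m11: "\<forall>h\<in>Hc T. \<exists>v\<in>Vc T. h = act T v (hzero T)"
    using gen by (simp add: S)
  show ?thesis unfolding forest_algebra_def
    using c c2 c3 c4 c5 m1 m2 m3 m4 m5 m6 m7 m8 m9 m10 m11 by blast
qed

lemma T_dist: "distributive A \<Longrightarrow> distributive T"
  unfolding distributive_def by (simp add: T_sel ball_img)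

end


section \<open>Encoding into lists\<close>

datatype 'v sx = SA 'v | SL "'v sx list"

fun enc :: "'h \<Rightarrow> 'v \<Rightarrow> 'v sx \<Rightarrow> ('h + 'v) list" where
  "enc h v0 (SA v) = [Inl h, Inr v]"
| "enc h v0 (SL xs) = Inr v0 # concat (map (\<lambda>x. Inl h # enc h v0 x) xs) @ [Inr v0]"

lemma enc_list:
  assumes IH: "\<And>x. x \<in> set xs \<Longrightarrow> (\<forall>y r s. enc h v0 x @ r = enc h v0 y @ s \<longrightarrow> x = y \<and> r = s)"
  shows "concat (map (\<lambda>x. Inl h # enc h v0 x) xs) @ Inr v0 # r = concat (map (\<lambda>x. Inl h # enc h v0 x) ys) @ Inr v0 # s
    \<Longrightarrow> xs = ys \<and> r = s"
  using IH
proof (induction xs arbitrary: ys r s)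
  case Nil
  then show ?case by (cases ys) auto
next
  case (Cons x xs)
  show ?case
  proof (cases ys)
    case Nil then show ?thesis using Cons.prems by simp
  next
    case (Cons y ys')
    have "enc h v0 x @ (concat (map (\<lambda>x. Inl h # enc h v0 x) xs) @ Inr v0 # r) =
          enc h v0 y @ (concat (map (\<lambda>x. Inl h # enc h v0 x) ys') @ Inr v0 # s)"
      using Cons.prems(1) Cons by simp
    then have "x = y" and rest: "concat (map (\<lambda>x. Inl h # enc h v0 x) xs) @ Inr v0 # r =
          concat (map (\<lambda>x. Inl h # enc h v0 x) ys') @ Inr v0 # s"
      using Cons.prems(2)[of x] by auto
    then show ?thesis using Cons.IH[OF rest] Cons.prems(2) \<open>ys = y # ys'\<close> by auto
  qed
qed

lemma enc_prefix: "enc h v0 x @ r = enc h v0 y @ s \<Longrightarrow> x = y \<and> r = s"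
proof (induction x arbitrary: y r s)
  case (SA v)
  then show ?case by (cases y) auto
next
  case (SL xs)
  show ?case
  proof (cases y)
    case (SA v) then show ?thesis using SL.prems by simp
  next
    case (SL ys)
    have "concat (map (\<lambda>x. Inl h # enc h v0 x) xs) @ Inr v0 # r = concat (map (\<lambda>x. Inl h # enc h v0 x) ys) @ Inr v0 # s"
      using SL.prems SL by simp
    moreover have IH': "\<And>x. x \<in> set xs \<Longrightarrow> (\<forall>y r s. enc h v0 x @ r = enc h v0 y @ s \<longrightarrow> x = y \<and> r = s)"
      using SL.IH by blast
    ultimately have "xs = ys \<and> r = s" using enc_list[OF IH'] by blast
    then show ?thesis using SL by simp
  qed
qed

lemma inj_enc: "inj (enc h v0)"
  by (rule injI) (use enc_prefix[where r = "[]" and s = "[]"] in auto)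

definition sx_list :: "('a \<Rightarrow> 'v sx) \<Rightarrow> 'a list \<Rightarrow> 'v sx" where
  "sx_list e xs = SL (map e xs)"
definition sx_fset :: "('a \<Rightarrow> 'v sx) \<Rightarrow> 'a fset \<Rightarrow> 'v sx" where
  "sx_fset e X = SL (map e (SOME l. set l = fset X))"
definition sx_pair :: "('a \<Rightarrow> 'v sx) \<Rightarrow> ('b \<Rightarrow> 'v sx) \<Rightarrow> 'a \<times> 'b \<Rightarrow> 'v sx" where
  "sx_pair e1 e2 p = SL [e1 (fst p), e2 (snd p)]"

lemma inj_sx_list: "inj e \<Longrightarrow> inj (sx_list e)"
  by (rule injI) (auto simp: sx_list_def dest: inj_map_eq_map[THEN iffD1, rotated])

lemma inj_sx_fset: "inj e \<Longrightarrow> inj (sx_fset e)"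
proof (rule injI)
  fix X Y assume ie: "inj e" and eq: "sx_fset e X = sx_fset e Y"
  have sX: "set (SOME l. set l = fset X) = fset X" by (rule someI_ex) (simp add: finite_list)
  have sY: "set (SOME l. set l = fset Y) = fset Y" by (rule someI_ex) (simp add: finite_list)
  have "(SOME l. set l = fset X) = (SOME l. set l = fset Y)"
    using eq ie by (auto simp: sx_fset_def inj_map_eq_map)
  then have "fset X = fset Y" using sX sY by metis
  then show "X = Y" by (simp add: fset_inject)
qed

lemma inj_sx_pair: "inj e1 \<Longrightarrow> inj e2 \<Longrightarrow> inj (sx_pair e1 e2)"
  by (rule injI) (auto simp: sx_pair_def dest: injD intro: prod_eqI)

lemma inj_SA: "inj SA" by (rule injI) simp


section \<open>Renaming and letterwise 2-distributivity\<close>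

primrec rn :: "('a \<Rightarrow> 'b) \<Rightarrow> 'a tree \<Rightarrow> 'b tree" where
  "rn r (Node a C) = Node (r a) (fimage (rn r) C)"

lemma tlabels_rn: "tlabels (rn r t) = r ` tlabels t"
  by (induction t) (auto simp: flabels_def)

lemma flabels_rn: "flabels (fimage (rn r) f) = r ` flabels f"
  by (auto simp: flabels_def tlabels_rn)

lemma tpaths_rn: "tpaths (rn r t) = map r ` tpaths t"
proof (induction t)
  case (Node a C)
  have "paths (fimage (rn r) C) = map r ` paths C"
    using Node by (auto simp: paths_def image_UN)
  then show ?case by (simp add: tpaths_Node image_image)
qed

lemma paths_rn: "paths (fimage (rn r) f) = map r ` paths f"
  by (auto simp: paths_def tpaths_rn)

lemma fev_rn: "fev A \<sigma> (rn r t) = fev A (\<lambda>a. \<sigma> (r a)) t"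
proof (induction t)
  case (Node a C)
  have "fimage (fev A \<sigma>) (fimage (rn r) C) = fimage (fev A (\<lambda>a. \<sigma> (r a))) C"
    using Node by (auto simp: fimage_fimage intro!: fset.map_cong)
  then show ?case by (simp add: fev_Node fevs_def)
qed

lemma fev_cong: "(\<And>a. a \<in> tlabels t \<Longrightarrow> \<sigma> a = \<sigma>' a) \<Longrightarrow> fev A \<sigma> t = fev A \<sigma>' t"
proof (induction t)
  case (Node a C)
  have "fimage (fev A \<sigma>) C = fimage (fev A \<sigma>') C"
    using Node by (auto simp: flabels_def intro!: fset.map_cong)
  then show ?case using Node by (simp add: fev_Node fevs_def)
qed

lemma fevs_rn_cong:
  assumes "\<And>a. a \<in> flabels E \<Longrightarrow> \<sigma> (r a) = \<tau> a"
  shows "fevs A \<sigma> (fimage (rn r) E) = fevs A \<tau> E"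
proof -
  have pt: "fev A \<sigma> (rn r t) = fev A \<tau> t" if t: "t |\<in>| E" for t
  proof -
    have "fev A \<sigma> (rn r t) = fev A (\<lambda>a. \<sigma> (r a)) t" by (rule fev_rn)
    also have "\<dots> = fev A \<tau> t"
      by (rule fev_cong) (use assms flabels_mem[of t E] t in auto)
    finally show ?thesis .
  qed
  have "fimage (fev A \<sigma>) (fimage (rn r) E) = fimage (fev A \<tau>) E"
    using pt by (auto simp: fimage_fimage intro!: fset.map_cong)
  then show ?thesis by (simp add: fevs_def)
qed

lemma two_dist_letter:
  fixes F :: "('h, 'v, 'z) falg_scheme"
  assumes FF: "forest_algebra F" and td: "two_distributive F"
    and a: "a \<in> Vc F" and l: "flabels E1 \<subseteq> Vc F" "flabels E2 \<subseteq> Vc F" and p: "paths E1 = paths E2"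
  shows "act F a (hadd F (fevs F id E1) (fevs F id E2)) =
         hadd F (act F a (fevs F id E1)) (act F a (fevs F id E2))"
proof -
  define L where "L = insert a (flabels E1 \<union> flabels E2)"
  have finL: "finite L" unfolding L_def by (simp add: finite_flabels)
  obtain r :: "'v \<Rightarrow> nat" where r: "inj_on r L"
    using finite_imp_inj_to_nat_seg[OF finL] by blast
  define \<sigma> where "\<sigma> = inv_into L r"
  define \<Sigma> where "\<Sigma> = r ` L"
  have \<sigma>r: "\<And>x. x \<in> L \<Longrightarrow> \<sigma> (r x) = x" unfolding \<sigma>_def using r by (simp add: inv_into_f_f)
  have LV: "L \<subseteq> Vc F" unfolding L_def using a l by auto
  have sig: "\<sigma> ` \<Sigma> \<subseteq> Vc F" unfolding \<Sigma>_def using \<sigma>r LV by auto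
  interpret FF: FEV F \<Sigma> \<sigma> by (intro FEV.intro FA.intro FEV_axioms.intro FF sig)
  interpret FI: FEV F "Vc F" id by (intro FEV.intro FA.intro FEV_axioms.intro FF) auto
  have finS: "finite \<Sigma>" unfolding \<Sigma>_def using finL by simp
  define E1' where "E1' = fimage (rn r) E1"
  define E2' where "E2' = fimage (rn r) E2"
  define v where "v = CNode {||} (r a) (CHole {||})"
  have lE': "flabels E1' \<subseteq> \<Sigma>" "flabels E2' \<subseteq> \<Sigma>" unfolding E1'_def E2'_def \<Sigma>_def L_def
    by (auto simp: flabels_rn)
  have ra: "r a \<in> \<Sigma>" unfolding \<Sigma>_def L_def by simp
  have p': "paths E1' = paths E2'" unfolding E1'_def E2'_def by (simp add: paths_rn p)
  have vin: "v \<in> Vc (free_falg \<Sigma>)" using ra by (simp add: v_def free_falg_def)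
  have fin: "E1' \<in> Hc (free_falg \<Sigma>)" "E2' \<in> Hc (free_falg \<Sigma>)" using lE' by (simp_all add: free_falg_def)
  have eq: "fevs F \<sigma> (fill v (E1' |\<union>| E2')) = fevs F \<sigma> (fill v E1' |\<union>| fill v E2')"
    using td finS FF.free_morphism vin fin p' unfolding two_distributive_def by blast
  have sa: "\<sigma> (r a) = a" using \<sigma>r L_def by simp
  have e1: "fevs F \<sigma> E1' = fevs F id E1" unfolding E1'_def
    by (rule fevs_rn_cong) (simp add: \<sigma>r L_def)
  have e2: "fevs F \<sigma> E2' = fevs F id E2" unfolding E2'_def
    by (rule fevs_rn_cong) (simp add: \<sigma>r L_def)
  have "fevs F \<sigma> (fill v (E1' |\<union>| E2')) = act F a (hadd F (fevs F id E1) (fevs F id E2))"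
    using lE' ra sa e1 e2 by (simp add: v_def FF.fevs_single FF.fevs_union fev_Node)
  moreover have "fevs F \<sigma> (fill v E1' |\<union>| fill v E2') = hadd F (act F a (fevs F id E1)) (act F a (fevs F id E2))"
  proof -
    have fv: "fill v X = {|Node (r a) X|}" for X by (simp add: v_def)
    have lf: "flabels (fill v E1') \<subseteq> \<Sigma>" "flabels (fill v E2') \<subseteq> \<Sigma>" using lE' ra fv by auto
    have "fevs F \<sigma> (fill v E1' |\<union>| fill v E2') = hadd F (fevs F \<sigma> (fill v E1')) (fevs F \<sigma> (fill v E2'))"
      using FF.fevs_union[OF lf] .
    then show ?thesis using lE' ra sa e1 e2 by (simp add: fv FF.fevs_single fev_Node)
  qed
  ultimately show ?thesis using eq by simp
qed


definition eW :: "'v list \<Rightarrow> 'v sx" where "eW = sx_list SA"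
definition eH2 :: "'v list fset \<Rightarrow> 'v sx" where "eH2 = sx_fset eW"
definition eV2 :: "'v list fset \<times> 'v list \<Rightarrow> 'v sx" where "eV2 = sx_pair eH2 eW"
definition eL :: "'v \<times> 'v list fset \<Rightarrow> 'v sx" where "eL = sx_pair SA eH2"
definition eH1 :: "('v \<times> 'v list fset) list fset \<Rightarrow> 'v sx" where "eH1 = sx_fset (sx_list eL)"
definition eV1 :: "('v \<times> 'v list fset) list fset \<times> ('v \<times> 'v list fset) list \<Rightarrow> 'v sx" where
  "eV1 = sx_pair eH1 (sx_list eL)"
definition cdx :: "'v sx \<Rightarrow> ('h + 'v) list" where "cdx = enc undefined undefined"

lemma inj_codes: "inj eW" "inj eH2" "inj eV2" "inj eL" "inj eH1" "inj eV1" "inj cdx"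
proof -
  show w: "inj eW" unfolding eW_def by (intro inj_sx_list inj_SA)
  show h2: "inj eH2" unfolding eH2_def by (intro inj_sx_fset w)
  show "inj eV2" unfolding eV2_def by (intro inj_sx_pair h2 w)
  show l: "inj eL" unfolding eL_def by (intro inj_sx_pair h2 inj_SA)
  show h1: "inj eH1" unfolding eH1_def by (intro inj_sx_fset inj_sx_list l)
  show "inj eV1" unfolding eV1_def by (intro inj_sx_pair h1 inj_sx_list l)
  show "inj cdx" unfolding cdx_def by (rule inj_enc)
qed

definition uA :: "'v \<Rightarrow> 'v list fset \<times> 'v list" where "uA a = ({|[a]|}, [a])"
definition gA :: "'v \<Rightarrow> 'v list fset \<Rightarrow> ('v \<times> 'v list fset) list fset \<times> ('v \<times> 'v list fset) list" where
  "gA a Y = ({|[(a, Y)]|}, [(a, Y)])"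

lemma uA_act: "act freeD (uA a) X = finsert [a] (fimage ((@) [a]) X)"
  by (simp add: uA_def)
lemma gA_act: "act freeD (gA a Y) X = finsert [(a, Y)] (fimage ((@) [(a, Y)]) X)"
  by (simp add: gA_def)

abbreviation D2 :: "('v list fset, 'v list fset \<times> 'v list) falg" where "D2 \<equiv> freeD"
abbreviation D1 :: "(('v \<times> 'v list fset) list fset, ('v \<times> 'v list fset) list fset \<times> ('v \<times> 'v list fset) list) falg"
  where "D1 \<equiv> freeD"

definition kap :: "'v forest \<Rightarrow> 'v list fset" where "kap f = fevs D2 uA f"

lemma D2_FEV: "FEV (D2 :: ('v list fset, 'v list fset \<times> 'v list) falg) UNIV (uA :: 'v \<Rightarrow> _)"
  by (intro FEV.intro FA.intro FEV_axioms.intro freeD_fa) simp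

lemma kap_paths: "fset (kap f) = paths f"
proof -
  interpret K: FEV "D2 :: ('v list fset, 'v list fset \<times> 'v list) falg" UNIV "uA :: 'v \<Rightarrow> _" by (rule D2_FEV)
  show ?thesis unfolding kap_def
  proof (induction f rule: forest_induct)
    case 1 then show ?case by simp
  next
    case (2 t f)
    then show ?case using K.fevs_insert[of t f] K.fevs_single[of t] by simp
  next
    case (3 a C)
    then show ?case using K.fevs_single[of "Node a C"]
      by (simp add: fev_Node uA_act tpaths_Node)
  qed
qed

lemma kap_empty[simp]: "kap {||} = {||}"
proof -
  interpret K: FEV "D2 :: ('v list fset, 'v list fset \<times> 'v list) falg" UNIV "uA :: 'v \<Rightarrow> _" by (rule D2_FEV)
  show ?thesis by (simp add: kap_def)
qed

lemma kap_union: "kap (f |\<union>| g) = kap f |\<union>| kap g"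
proof -
  interpret K: FEV "D2 :: ('v list fset, 'v list fset \<times> 'v list) falg" UNIV "uA :: 'v \<Rightarrow> _" by (rule D2_FEV)
  show ?thesis unfolding kap_def by (simp add: K.fevs_union)
qed

lemma kap_Node: "kap {|Node a C|} = act D2 (uA a) (kap C)"
proof -
  interpret K: FEV "D2 :: ('v list fset, 'v list fset \<times> 'v list) falg" UNIV "uA :: 'v \<Rightarrow> _" by (rule D2_FEV)
  show ?thesis unfolding kap_def by (simp add: K.fevs_single fev_Node)
qed

lemma key_F:
  fixes F :: "('h, 'v, 'z) falg_scheme"
  assumes FF: "forest_algebra F" and td: "two_distributive F"
    and l: "flabels f \<subseteq> Vc F" "flabels g \<subseteq> Vc F" and e: "glps kap f = glps kap g"
  shows "fevs F id f = fevs F id g"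
proof -
  interpret FI: FEV F "Vc F" id by (intro FEV.intro FA.intro FEV_axioms.intro FF) auto
  interpret AB: ABS F "Vc F" id kap
  proof
    fix E1 E2 :: "'v forest" assume "kap E1 = kap E2"
    then show "kap (E1 |\<union>| E2) = kap E1" by (simp add: kap_union)
  next
    fix a E1 E2 assume "a \<in> Vc F" "flabels E1 \<subseteq> Vc F" "flabels E2 \<subseteq> Vc F" "kap E1 = kap E2"
    moreover then have "paths E1 = paths E2" by (metis kap_paths)
    ultimately show "act F (id a) (hadd F (fevs F id E1) (fevs F id E2)) =
       hadd F (act F (id a) (fevs F id E1)) (act F (id a) (fevs F id E2))"
      using two_dist_letter[OF FF td] by simp
  qed
  show ?thesis using AB.glps_eq[OF l e] .
qed


lemma dir2:
  fixes F :: "('h, 'v) falg"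
  assumes FF: "forest_algebra F" and td: "two_distributive F"
  shows "\<exists>(G1 :: (('h + 'v) list, ('h + 'v) list) falg) (G2 :: (('h + 'v) list, ('h + 'v) list) falg).
              forest_algebra G1 \<and> forest_algebra G2 \<and> distributive G1 \<and> distributive G2 \<and>
              divides F (wreath G1 G2)"
proof -
  define i1 where "i1 = (cdx :: 'v sx \<Rightarrow> ('h + 'v) list) \<circ> eH1"
  define j1 where "j1 = (cdx :: 'v sx \<Rightarrow> ('h + 'v) list) \<circ> eV1"
  define i2 where "i2 = (cdx :: 'v sx \<Rightarrow> ('h + 'v) list) \<circ> eH2"
  define j2 where "j2 = (cdx :: 'v sx \<Rightarrow> ('h + 'v) list) \<circ> eV2"
  have inj: "inj i1" "inj j1" "inj i2" "inj j2"
    unfolding i1_def j1_def i2_def j2_def using inj_codes by (auto intro: inj_compose)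
  interpret T1: TR "D1 :: (('v \<times> 'v list fset) list fset, _) falg" i1 j1
    by (intro TR.intro FA.intro TR_axioms.intro freeD_fa) (simp_all add: inj)
  interpret T2: TR "D2 :: ('v list fset, _) falg" i2 j2
    by (intro TR.intro FA.intro TR_axioms.intro freeD_fa) (simp_all add: inj)
  define G1 where "G1 = transp (D1 :: (('v \<times> 'v list fset) list fset, _) falg) i1 j1"
  define G2 where "G2 = transp (D2 :: ('v list fset, _) falg) i2 j2"
  have fa1: "forest_algebra G1" and fa2: "forest_algebra G2"
    unfolding G1_def G2_def by (rule T1.T_fa, rule T2.T_fa)
  have di1: "distributive G1" and di2: "distributive G2"
    unfolding G1_def G2_def by (rule T1.T_dist[OF freeD_dist], rule T2.T_dist[OF freeD_dist])
  have g1: "Hc G1 = range i1" "Vc G1 = range j1" "hzero G1 = i1 {||}"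
    "\<And>X Y. hadd G1 (i1 X) (i1 Y) = i1 (X |\<union>| Y)" "\<And>g X. act G1 (j1 g) (i1 X) = i1 (act D1 g X)"
    unfolding G1_def by (simp_all add: T1.T_sel)
  have g2: "Hc G2 = range i2" "Vc G2 = range j2" "hzero G2 = i2 {||}"
    "\<And>X Y. hadd G2 (i2 X) (i2 Y) = i2 (X |\<union>| Y)" "\<And>g X. act G2 (j2 g) (i2 X) = i2 (act D2 g X)"
    unfolding G2_def by (simp_all add: T2.T_sel)
  let ?W = "wreath G1 G2"
  interpret WA: FA ?W by (rule FA.intro, rule wreath_fa[OF fa1 fa2])
  define \<sigma>' where "\<sigma>' a = (\<lambda>Y\<in>Hc G2. j1 (gA a (inv_into UNIV i2 Y)), j2 (uA a))" for a :: 'v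
  have sigU: "\<sigma>' ` UNIV \<subseteq> Vc ?W"
    by (auto simp: \<sigma>'_def g1 g2)
  interpret W: FEV ?W UNIV \<sigma>' by (intro FEV.intro FEV_axioms.intro WA.FA_axioms sigU)
  have E: "\<exists>X. fevs ?W \<sigma>' f = (i1 X, i2 (kap f)) \<and> fset X = glps kap f" for f
  proof (induction f rule: forest_induct)
    case 1
    show ?case
      by (rule exI[of _ "{||}"]) (simp add: g1 g2)
  next
    case (2 t f)
    then obtain X1 X2 where x1: "fevs ?W \<sigma>' {|t|} = (i1 X1, i2 (kap {|t|}))" "fset X1 = glps kap {|t|}"
      and x2: "fevs ?W \<sigma>' f = (i1 X2, i2 (kap f))" "fset X2 = glps kap f" by blast
    have "fevs ?W \<sigma>' (finsert t f) = hadd ?W (fevs ?W \<sigma>' {|t|}) (fevs ?W \<sigma>' f)"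
      using W.fevs_insert[of t f] W.fevs_single[of t] by simp
    also have "\<dots> = (i1 (X1 |\<union>| X2), i2 (kap {|t|} |\<union>| kap f))"
      using x1 x2 by (simp add: g1 g2)
    also have "kap {|t|} |\<union>| kap f = kap (finsert t f)" using kap_union[of "{|t|}" f] by simp
    finally show ?case using x1 x2 by (intro exI[of _ "X1 |\<union>| X2"]) simp
  next
    case (3 a C)
    then obtain X where x: "fevs ?W \<sigma>' C = (i1 X, i2 (kap C))" "fset X = glps kap C" by blast
    have "fevs ?W \<sigma>' {|Node a C|} = act ?W (\<sigma>' a) (i1 X, i2 (kap C))"
      using x W.fevs_single[of "Node a C"] by (simp add: fev_Node)
    also have "\<dots> = (i1 (act D1 (gA a (kap C)) X), i2 (act D2 (uA a) (kap C)))"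
      using inj(3) by (simp add: \<sigma>'_def g1 g2)
    also have "act D2 (uA a) (kap C) = kap {|Node a C|}" by (simp add: kap_Node)
    finally show ?case using x
      by (intro exI[of _ "act D1 (gA a (kap C)) X"]) (simp add: gA_act glp_Node)
  qed
  have K1: "fevs F id f = fevs F id g"
    if "flabels f \<subseteq> Vc F" "flabels g \<subseteq> Vc F" "fevs ?W \<sigma>' f = fevs ?W \<sigma>' g" for f g
  proof -
    obtain X where x: "fevs ?W \<sigma>' f = (i1 X, i2 (kap f))" "fset X = glps kap f" using E by blast
    obtain Y where y: "fevs ?W \<sigma>' g = (i1 Y, i2 (kap g))" "fset Y = glps kap g" using E by blast
    have "X = Y" using x y that(3) inj(1) by (auto dest: injD)
    then have "glps kap f = glps kap g" using x y by simp
    then show ?thesis using key_F[OF FF td that(1,2)] by simp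
  qed
  interpret FI: FEV F "Vc F" id by (intro FEV.intro FA.intro FEV_axioms.intro FF) auto
  have sigV: "\<sigma>' ` Vc F \<subseteq> Vc ?W" using sigU by auto
  interpret WV: FEV ?W "Vc F" \<sigma>' by (intro FEV.intro FEV_axioms.intro WA.FA_axioms sigV)
  define H where "H = fevs ?W \<sigma>' ` {f. flabels f \<subseteq> Vc F}"
  define V where "V = cev ?W \<sigma>' ` {c. clabels c \<subseteq> Vc F}"
  have sub: "is_subalgebra ?W H V"
    unfolding is_subalgebra_def H_def V_def ball_img
  proof (intro conjI ballI)
    show "fevs ?W \<sigma>' ` {f. flabels f \<subseteq> Vc F} \<subseteq> Hc ?W"
      by (rule image_subsetI, rule WV.fevs_c) simp
    show "cev ?W \<sigma>' ` {c. clabels c \<subseteq> Vc F} \<subseteq> Vc ?W"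
      by (rule image_subsetI, rule WV.cev_c) simp
    show "hzero ?W \<in> fevs ?W \<sigma>' ` {f. flabels f \<subseteq> Vc F}"
      by (rule image_eqI[of _ _ "{||}"]) simp_all
    show "vone ?W \<in> cev ?W \<sigma>' ` {c. clabels c \<subseteq> Vc F}"
      by (rule image_eqI[of _ _ "CHole {||}"]) (simp_all add: WA.ins_zero del: wreath_sel)
  next
    fix f g assume "f \<in> {f. flabels f \<subseteq> Vc F}" "g \<in> {f. flabels f \<subseteq> Vc F}"
    then show "hadd ?W (fevs ?W \<sigma>' f) (fevs ?W \<sigma>' g) \<in> fevs ?W \<sigma>' ` {f. flabels f \<subseteq> Vc F}"
      by (intro image_eqI[of _ _ "f |\<union>| g"]) (simp_all add: WV.fevs_union)
  next
    fix f g assume "f \<in> {c. clabels c \<subseteq> Vc F}" "g \<in> {c. clabels c \<subseteq> Vc F}"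
    then show "vmul ?W (cev ?W \<sigma>' f) (cev ?W \<sigma>' g) \<in> cev ?W \<sigma>' ` {c. clabels c \<subseteq> Vc F}"
      by (intro image_eqI[of _ _ "ccomp f g"]) (simp_all add: WV.cev_ccomp)
  next
    fix c f assume "c \<in> {c. clabels c \<subseteq> Vc F}" "f \<in> {f. flabels f \<subseteq> Vc F}"
    then show "act ?W (cev ?W \<sigma>' c) (fevs ?W \<sigma>' f) \<in> fevs ?W \<sigma>' ` {f. flabels f \<subseteq> Vc F}"
      by (intro image_eqI[of _ _ "fill c f"]) (simp_all add: WV.fevs_fill)
  next
    fix f assume "f \<in> {f. flabels f \<subseteq> Vc F}"
    then show "ins ?W (fevs ?W \<sigma>' f) \<in> cev ?W \<sigma>' ` {c. clabels c \<subseteq> Vc F}"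
      by (intro image_eqI[of _ _ "CHole f"]) simp_all
  qed
  define \<theta> where "\<theta> x = fevs F id (SOME f. flabels f \<subseteq> Vc F \<and> fevs ?W \<sigma>' f = x)" for x
  define \<chi> where "\<chi> x = cev F id (SOME c. clabels c \<subseteq> Vc F \<and> cev ?W \<sigma>' c = x)" for x
  have \<theta>f: "\<theta> (fevs ?W \<sigma>' f) = fevs F id f" if "flabels f \<subseteq> Vc F" for f
  proof -
    have "\<exists>g. flabels g \<subseteq> Vc F \<and> fevs ?W \<sigma>' g = fevs ?W \<sigma>' f" using that by blast
    then have "flabels (SOME g. flabels g \<subseteq> Vc F \<and> fevs ?W \<sigma>' g = fevs ?W \<sigma>' f) \<subseteq> Vc F \<and>
       fevs ?W \<sigma>' (SOME g. flabels g \<subseteq> Vc F \<and> fevs ?W \<sigma>' g = fevs ?W \<sigma>' f) = fevs ?W \<sigma>' f"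
      by (rule someI_ex)
    then show ?thesis unfolding \<theta>_def using K1 that by blast
  qed
  have K2: "cev F id c = cev F id d"
    if l: "clabels c \<subseteq> Vc F" "clabels d \<subseteq> Vc F" and e: "cev ?W \<sigma>' c = cev ?W \<sigma>' d" for c d
  proof (rule FI.faithful)
    show "cev F id c \<in> Vc F" "cev F id d \<in> Vc F" using l by simp_all
    fix h assume "h \<in> Hc F"
    then obtain u where u: "u \<in> Vc F" "h = act F u (hzero F)" using FI.gen by blast
    define f where "f = {|Node u {||}|}"
    have lf: "flabels f \<subseteq> Vc F" using u by (simp add: f_def)
    have hf: "h = fevs F id f" using u by (simp add: f_def FI.fevs_single fev_Node)
    have "fevs ?W \<sigma>' (fill c f) = fevs ?W \<sigma>' (fill d f)"
      using e l lf by (simp add: WV.fevs_fill)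
    then have "fevs F id (fill c f) = fevs F id (fill d f)" using K1 l lf by simp
    then show "act F (cev F id c) h = act F (cev F id d) h" using l lf hf by (simp add: FI.fevs_fill)
  qed
  have \<chi>c: "\<chi> (cev ?W \<sigma>' c) = cev F id c" if "clabels c \<subseteq> Vc F" for c
  proof -
    have "\<exists>g. clabels g \<subseteq> Vc F \<and> cev ?W \<sigma>' g = cev ?W \<sigma>' c" using that by blast
    then have "clabels (SOME g. clabels g \<subseteq> Vc F \<and> cev ?W \<sigma>' g = cev ?W \<sigma>' c) \<subseteq> Vc F \<and>
       cev ?W \<sigma>' (SOME g. clabels g \<subseteq> Vc F \<and> cev ?W \<sigma>' g = cev ?W \<sigma>' c) = cev ?W \<sigma>' c"
      by (rule someI_ex)
    then show ?thesis unfolding \<chi>_def using K2 that by blast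
  qed
  have hom: "morphism (restrict_alg ?W H V) F \<theta> \<chi>"
    unfolding morphism_def restrict_sel H_def V_def ball_img
  proof (intro conjI ballI)
    fix f assume "f \<in> {f. flabels f \<subseteq> Vc F}" then show "\<theta> (fevs ?W \<sigma>' f) \<in> Hc F" by (simp add: \<theta>f)
  next
    fix c assume "c \<in> {c. clabels c \<subseteq> Vc F}" then show "\<chi> (cev ?W \<sigma>' c) \<in> Vc F" by (simp add: \<chi>c)
  next
    show "\<theta> (hzero ?W) = hzero F" using \<theta>f[of "{||}"] by (simp del: wreath_sel)
  next
    fix f g assume "f \<in> {f. flabels f \<subseteq> Vc F}" "g \<in> {f. flabels f \<subseteq> Vc F}"
    then show "\<theta> (hadd ?W (fevs ?W \<sigma>' f) (fevs ?W \<sigma>' g)) = hadd F (\<theta> (fevs ?W \<sigma>' f)) (\<theta> (fevs ?W \<sigma>' g))"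
      using \<theta>f[of "f |\<union>| g"] by (simp add: WV.fevs_union FI.fevs_union \<theta>f)
  next
    show "\<chi> (vone ?W) = vone F" using \<chi>c[of "CHole {||}"] by (simp add: WA.ins_zero FI.ins_zero del: wreath_sel)
  next
    fix c d assume "c \<in> {c. clabels c \<subseteq> Vc F}" "d \<in> {c. clabels c \<subseteq> Vc F}"
    then show "\<chi> (vmul ?W (cev ?W \<sigma>' c) (cev ?W \<sigma>' d)) = vmul F (\<chi> (cev ?W \<sigma>' c)) (\<chi> (cev ?W \<sigma>' d))"
      using \<chi>c[of "ccomp c d"] by (simp add: WV.cev_ccomp FI.cev_ccomp \<chi>c)
  next
    fix c f assume "c \<in> {c. clabels c \<subseteq> Vc F}" "f \<in> {f. flabels f \<subseteq> Vc F}"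
    then show "\<theta> (act ?W (cev ?W \<sigma>' c) (fevs ?W \<sigma>' f)) = act F (\<chi> (cev ?W \<sigma>' c)) (\<theta> (fevs ?W \<sigma>' f))"
      using \<theta>f[of "fill c f"] by (simp add: WV.fevs_fill FI.fevs_fill \<theta>f \<chi>c)
  next
    fix f assume "f \<in> {f. flabels f \<subseteq> Vc F}"
    then show "\<chi> (ins ?W (fevs ?W \<sigma>' f)) = ins F (\<theta> (fevs ?W \<sigma>' f))"
      using \<chi>c[of "CHole f"] by (simp add: \<theta>f)
  qed
  have sH: "\<theta> ` H = Hc F"
  proof
    show "\<theta> ` H \<subseteq> Hc F" unfolding H_def by (auto simp: \<theta>f)
    show "Hc F \<subseteq> \<theta> ` H"
    proof
      fix h assume "h \<in> Hc F"
      then obtain u where u: "u \<in> Vc F" "h = act F u (hzero F)" using FI.gen by blast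
      have "h = \<theta> (fevs ?W \<sigma>' {|Node u {||}|})" using u by (simp add: \<theta>f FI.fevs_single fev_Node)
      moreover have "fevs ?W \<sigma>' {|Node u {||}|} \<in> H" unfolding H_def
        by (rule imageI) (simp add: u)
      ultimately show "h \<in> \<theta> ` H" by (rule image_eqI)
    qed
  qed
  have sV: "\<chi> ` V = Vc F"
  proof
    show "\<chi> ` V \<subseteq> Vc F" unfolding V_def by (auto simp: \<chi>c)
    show "Vc F \<subseteq> \<chi> ` V"
    proof
      fix u assume u: "u \<in> Vc F"
      have c1: "\<chi> (cev ?W \<sigma>' (CNode {||} u (CHole {||}))) = cev F id (CNode {||} u (CHole {||}))"
        by (rule \<chi>c) (simp add: u)
      have c2: "cev F id (CNode {||} u (CHole {||})) = u" using u by (simp add: FI.ins_zero)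
      have "u = \<chi> (cev ?W \<sigma>' (CNode {||} u (CHole {||})))" using c1 c2 by simp
      moreover have "cev ?W \<sigma>' (CNode {||} u (CHole {||})) \<in> V" unfolding V_def
        by (rule imageI) (simp add: u)
      ultimately show "u \<in> \<chi> ` V" by (rule image_eqI)
    qed
  qed
  have "divides F ?W" by (rule divides_hom[OF sub hom sH sV])
  then show ?thesis using fa1 fa2 di1 di2 by blast
qed


theorem mainTheorem4:
  fixes F :: "('h, 'v) falg"
  assumes "forest_algebra F"
  shows "(\<forall>(G1 :: ('a, 'b) falg) (G2 :: ('c, 'd) falg).
            forest_algebra G1 \<and> forest_algebra G2 \<and> distributive G1 \<and> distributive G2 \<and>
            divides F (wreath G1 G2) \<longrightarrow> two_distributive F)
       \<and> (two_distributive F \<longrightarrow>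
           (\<exists>(G1 :: (('h + 'v) list, ('h + 'v) list) falg) (G2 :: (('h + 'v) list, ('h + 'v) list) falg).
              forest_algebra G1 \<and> forest_algebra G2 \<and> distributive G1 \<and> distributive G2 \<and>
              divides F (wreath G1 G2)))"
proof (intro conjI allI impI)
  fix G1 :: "('a, 'b) falg" and G2 :: "('c, 'd) falg"
  assume "forest_algebra G1 \<and> forest_algebra G2 \<and> distributive G1 \<and> distributive G2 \<and> divides F (wreath G1 G2)"
  then show "two_distributive F" using dir1[OF assms] by blast
next
  assume "two_distributive F"
  then show "\<exists>(G1 :: (('h + 'v) list, ('h + 'v) list) falg) (G2 :: (('h + 'v) list, ('h + 'v) list) falg).
              forest_algebra G1 \<and> forest_algebra G2 \<and> distributive G1 \<and> distributive G2 \<and>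
              divides F (wreath G1 G2)"
    by (rule dir2[OF assms])
qed

end
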